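(* For any combinatorial auction as described in the context, Algorithm 1 (described in the context) converges to Artificial Walrasian Equilibrium prices: its loop ends, and the price vector $p$ (on original and artificial items) produced in the final step, together with $x^*$, forms an Artificial Walrasian Equilibrium.
   Context: Combinatorial auction: item types $j\in\mathcal J$ with supply $c_j\in\mathbb Z_{\ge1}$ (vector $c$); bidders $\mathcal I$; finite set of bids $\mathcal K$, bid $k$ made by bidder $i(k)$ with bundle $a^k\in\mathbb Z^J_{\ge0}$, $a^k\le c$, amount $b_k\ge0$ (row vector $b$); bids taken truthful. $\bm A$ = matrix with columns $a^k$, $\bm B$ with $\bm B_{i,k}=1$ iff bid $k$ belongs to bidder $i$. WDP: maximize $bx$ over $x\in\{0,1\}^K$ with $\bm Ax\le c$, $\bm Bx\le\bm 1$ (feasible allocations); WDP-LP is its relaxation with $0\le x\le\bm 1$, with optimal value $w^f$; $w$ is the WDP optimum and $x^*$ an optimal WDP solution; $a^{i*},b_{i*}$ bundle and amount of $i$'s accepted bid. $\bm D$ is the matrix whose columns are $x^*-x^\ell$ over all set-maximal feasible allocations $x^\ell$ (feasible allocations to which no further bid can be added). A valid cut is $(\alpha,\alpha_0)$, $\alpha\in\mathbb R^K_{\ge0}$, with $\alpha x\le\alpha_0$ for all feasible $x$ and $\alpha x^*=\alpha_0$; it is added as an artificial item by appending row $\alpha$ to $\bm A$ with supply $\alpha_0$. A Walrasian equilibrium is $(x^*,p)$, $p\ge0$, with $s_i=b_{i*}-p\,a^{i*}\ge0$, $p\,a^k+s_{i(k)}\ge b_k$ for all $k$, and $p_j=0$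 for items in excess supply; an Artificial Walrasian Equilibrium (AWE) is a Walrasian equilibrium of the auction augmented by finitely many valid cuts. Algorithm 1: Solve WDP and WDP-LP. While $w^f>w$: with $x^f$ the current optimal WDP-LP solution, solve the LP: maximize $\bar\alpha x^f$ over $\bar\alpha\in\mathbb R^K_{\ge0}$ subject to $\bar\alpha\bm D\ge\bm 0$ and $\bar\alpha x^*=\bar\alpha_0=1$; find the smallest $\gamma\ge1$ with $\gamma\bar\alpha_k\in\mathbb Z$ for all $k$; add the cut $(\gamma\bar\alpha,\gamma)$ as an artificial item to all formulations; re-solve WDP-LP, updating $w^f$ and $x^f$. After the loop, solve: minimize $\sum_j c_jp_j^2$ over $p\ge0$, $s\in\mathbb R^I_{\ge0}$ subject to $p\bm A+s\bm B\ge b$ and $pc+s\bm 1=bx^*$ (with all cuts included as items), and output $p$. *)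

theory Defs
  imports Complex_Main
begin

text \<open>Combinatorial auction data: bids of finite type 'k, items of finite type 'j,
  bidders of finite type 'i.  a k j = number of units of item j in bid k,
  c j = supply of item j, b k = amount of bid k, bidder k = bidder of bid k.  A cut is a pair
  (alpha, alpha0) with alpha :: 'k => real; cut number l of a list cs is the
  artificial item l with "bundle" entries fst (cs!l) k and supply snd (cs!l).\<close>

type_synonym 'k cut = "('k \<Rightarrow> real) \<times> real"

definition feasible_alloc ::
  "('k::finite \<Rightarrow> 'j::finite \<Rightarrow> nat) \<Rightarrow> ('j \<Rightarrow> nat) \<Rightarrow> ('k \<Rightarrow> 'i) \<Rightarrow> ('k \<Rightarrow> real) \<Rightarrow> bool" where
  "feasible_alloc a c bidder x \<longleftrightarrow>
     (\<forall>k. x k \<in> {0, 1}) \<and>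
     (\<forall>j. (\<Sum>k\<in>UNIV. real (a k j) * x k) \<le> real (c j)) \<and>
     (\<forall>i. (\<Sum>k\<in>{k. bidder k = i}. x k) \<le> 1)"

definition wdp_optimal ::
  "('k::finite \<Rightarrow> 'j::finite \<Rightarrow> nat) \<Rightarrow> ('j \<Rightarrow> nat) \<Rightarrow> ('k \<Rightarrow> real) \<Rightarrow> ('k \<Rightarrow> 'i) \<Rightarrow> ('k \<Rightarrow> real) \<Rightarrow> bool" where
  "wdp_optimal a c b bidder xs \<longleftrightarrow> feasible_alloc a c bidder xs \<and>
     (\<forall>x. feasible_alloc a c bidder x \<longrightarrow> (\<Sum>k\<in>UNIV. b k * x k) \<le> (\<Sum>k\<in>UNIV. b k * xs k))"

definition lp_feasible ::
  "('k::finite \<Rightarrow> 'j::finite \<Rightarrow> nat) \<Rightarrow> ('j \<Rightarrow> nat) \<Rightarrow> ('k \<Rightarrow> 'i) \<Rightarrow> 'k cut list \<Rightarrow> ('k \<Rightarrow> real) \<Rightarrow> bool" where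
  "lp_feasible a c bidder cs x \<longleftrightarrow>
     (\<forall>k. 0 \<le> x k \<and> x k \<le> 1) \<and>
     (\<forall>j. (\<Sum>k\<in>UNIV. real (a k j) * x k) \<le> real (c j)) \<and>
     (\<forall>i. (\<Sum>k\<in>{k. bidder k = i}. x k) \<le> 1) \<and>
     (\<forall>l<length cs. (\<Sum>k\<in>UNIV. fst (cs ! l) k * x k) \<le> snd (cs ! l))"

definition lp_value ::
  "('k::finite \<Rightarrow> 'j::finite \<Rightarrow> nat) \<Rightarrow> ('j \<Rightarrow> nat) \<Rightarrow> ('k \<Rightarrow> real) \<Rightarrow> ('k \<Rightarrow> 'i) \<Rightarrow> 'k cut list \<Rightarrow> real" where
  "lp_value a c b bidder cs = Sup ((\<lambda>x. \<Sum>k\<in>UNIV. b k * x k) ` {x. lp_feasible a c bidder cs x})"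

definition lp_optimal ::
  "('k::finite \<Rightarrow> 'j::finite \<Rightarrow> nat) \<Rightarrow> ('j \<Rightarrow> nat) \<Rightarrow> ('k \<Rightarrow> real) \<Rightarrow> ('k \<Rightarrow> 'i) \<Rightarrow> 'k cut list \<Rightarrow> ('k \<Rightarrow> real) \<Rightarrow> bool" where
  "lp_optimal a c b bidder cs x \<longleftrightarrow> lp_feasible a c bidder cs x \<and>
     (\<forall>y. lp_feasible a c bidder cs y \<longrightarrow> (\<Sum>k\<in>UNIV. b k * y k) \<le> (\<Sum>k\<in>UNIV. b k * x k))"

text \<open>Set-maximal feasible allocations (the columns x^l defining D).\<close>
definition maximal_alloc ::
  "('k::finite \<Rightarrow> 'j::finite \<Rightarrow> nat) \<Rightarrow> ('j \<Rightarrow> nat) \<Rightarrow> ('k \<Rightarrow> 'i) \<Rightarrow> ('k \<Rightarrow> real) \<Rightarrow> bool" where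
  "maximal_alloc a c bidder x \<longleftrightarrow> feasible_alloc a c bidder x \<and>
     (\<forall>k. x k = 0 \<longrightarrow> \<not> feasible_alloc a c bidder (x(k := 1)))"

definition sep_feasible ::
  "('k::finite \<Rightarrow> 'j::finite \<Rightarrow> nat) \<Rightarrow> ('j \<Rightarrow> nat) \<Rightarrow> ('k \<Rightarrow> 'i) \<Rightarrow> ('k \<Rightarrow> real) \<Rightarrow> ('k \<Rightarrow> real) \<Rightarrow> bool" where
  "sep_feasible a c bidder xs al \<longleftrightarrow>
     (\<forall>k. 0 \<le> al k) \<and>
     (\<forall>xl. maximal_alloc a c bidder xl \<longrightarrow> 0 \<le> (\<Sum>k\<in>UNIV. al k * (xs k - xl k))) \<and>
     (\<Sum>k\<in>UNIV. al k * xs k) = 1"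

definition is_vertex :: "('k \<Rightarrow> real) set \<Rightarrow> ('k \<Rightarrow> real) \<Rightarrow> bool" where
  "is_vertex S v \<longleftrightarrow> v \<in> S \<and>
     \<not> (\<exists>u\<in>S. \<exists>w\<in>S. u \<noteq> w \<and> (\<exists>t. 0 < t \<and> t < 1 \<and> v = (\<lambda>k. (1 - t) * u k + t * w k)))"

definition sep_solution ::
  "('k::finite \<Rightarrow> 'j::finite \<Rightarrow> nat) \<Rightarrow> ('j \<Rightarrow> nat) \<Rightarrow> ('k \<Rightarrow> 'i) \<Rightarrow> ('k \<Rightarrow> real) \<Rightarrow> ('k \<Rightarrow> real) \<Rightarrow> ('k \<Rightarrow> real) \<Rightarrow> bool" where
  "sep_solution a c bidder xs xf al \<longleftrightarrow>
     is_vertex {be. sep_feasible a c bidder xs be} al \<and>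
     (\<forall>be. sep_feasible a c bidder xs be \<longrightarrow> (\<Sum>k\<in>UNIV. be k * xf k) \<le> (\<Sum>k\<in>UNIV. al k * xf k))"

definition least_scale :: "('k \<Rightarrow> real) \<Rightarrow> real \<Rightarrow> bool" where
  "least_scale al g \<longleftrightarrow> 1 \<le> g \<and> (\<forall>k. g * al k \<in> \<int>) \<and>
     (\<forall>g'. 1 \<le> g' \<and> (\<forall>k. g' * al k \<in> \<int>) \<longrightarrow> g \<le> g')"

definition alg_step ::
  "('k::finite \<Rightarrow> 'j::finite \<Rightarrow> nat) \<Rightarrow> ('j \<Rightarrow> nat) \<Rightarrow> ('k \<Rightarrow> real) \<Rightarrow> ('k \<Rightarrow> 'i) \<Rightarrow> ('k \<Rightarrow> real)
     \<Rightarrow> 'k cut list \<Rightarrow> 'k cut list \<Rightarrow> bool" where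
  "alg_step a c b bidder xs cs cs' \<longleftrightarrow>
     (\<Sum>k\<in>UNIV. b k * xs k) < lp_value a c b bidder cs \<and>
     (\<exists>xf al g. lp_optimal a c b bidder cs xf \<and> sep_solution a c bidder xs xf al \<and>
        least_scale al g \<and> cs' = cs @ [(\<lambda>k. g * al k, g)])"

definition valid_cut ::
  "('k::finite \<Rightarrow> 'j::finite \<Rightarrow> nat) \<Rightarrow> ('j \<Rightarrow> nat) \<Rightarrow> ('k \<Rightarrow> 'i) \<Rightarrow> ('k \<Rightarrow> real) \<Rightarrow> 'k cut \<Rightarrow> bool" where
  "valid_cut a c bidder xs ct \<longleftrightarrow>
     (\<forall>k. 0 \<le> fst ct k) \<and>
     (\<forall>x. feasible_alloc a c bidder x \<longrightarrow> (\<Sum>k\<in>UNIV. fst ct k * x k) \<le> snd ct) \<and>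
     (\<Sum>k\<in>UNIV. fst ct k * xs k) = snd ct"

text \<open>Price of bid k in the augmented auction: p on original items, q l on cut l.\<close>
definition bid_price ::
  "('k::finite \<Rightarrow> 'j::finite \<Rightarrow> nat) \<Rightarrow> 'k cut list \<Rightarrow> ('j \<Rightarrow> real) \<Rightarrow> (nat \<Rightarrow> real) \<Rightarrow> 'k \<Rightarrow> real" where
  "bid_price a cs p q k = (\<Sum>j\<in>UNIV. p j * real (a k j)) + (\<Sum>l<length cs. q l * fst (cs ! l) k)"

definition qp_feasible ::
  "('k::finite \<Rightarrow> 'j::finite \<Rightarrow> nat) \<Rightarrow> ('j \<Rightarrow> nat) \<Rightarrow> ('k \<Rightarrow> real) \<Rightarrow> ('k \<Rightarrow> 'i::finite) \<Rightarrow> ('k \<Rightarrow> real)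
     \<Rightarrow> 'k cut list \<Rightarrow> ('j \<Rightarrow> real) \<Rightarrow> (nat \<Rightarrow> real) \<Rightarrow> ('i \<Rightarrow> real) \<Rightarrow> bool" where
  "qp_feasible a c b bidder xs cs p q s \<longleftrightarrow>
     (\<forall>j. 0 \<le> p j) \<and> (\<forall>l<length cs. 0 \<le> q l) \<and> (\<forall>i. 0 \<le> s i) \<and>
     (\<forall>k. b k \<le> bid_price a cs p q k + s (bidder k)) \<and>
     (\<Sum>j\<in>UNIV. p j * real (c j)) + (\<Sum>l<length cs. q l * snd (cs ! l)) + (\<Sum>i\<in>UNIV. s i)
       = (\<Sum>k\<in>UNIV. b k * xs k)"

definition qp_objective ::
  "('j::finite \<Rightarrow> nat) \<Rightarrow> 'k cut list \<Rightarrow> ('j \<Rightarrow> real) \<Rightarrow> (nat \<Rightarrow> real) \<Rightarrow> real" where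
  "qp_objective c cs p q = (\<Sum>j\<in>UNIV. real (c j) * (p j)\<^sup>2) + (\<Sum>l<length cs. snd (cs ! l) * (q l)\<^sup>2)"

definition qp_optimal ::
  "('k::finite \<Rightarrow> 'j::finite \<Rightarrow> nat) \<Rightarrow> ('j \<Rightarrow> nat) \<Rightarrow> ('k \<Rightarrow> real) \<Rightarrow> ('k \<Rightarrow> 'i::finite) \<Rightarrow> ('k \<Rightarrow> real)
     \<Rightarrow> 'k cut list \<Rightarrow> ('j \<Rightarrow> real) \<Rightarrow> (nat \<Rightarrow> real) \<Rightarrow> ('i \<Rightarrow> real) \<Rightarrow> bool" where
  "qp_optimal a c b bidder xs cs p q s \<longleftrightarrow> qp_feasible a c b bidder xs cs p q s \<and>
     (\<forall>p' q' s'. qp_feasible a c b bidder xs cs p' q' s' \<longrightarrow> qp_objective c cs p q \<le> qp_objective c cs p' q')"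

text \<open>Surplus of bidder i at prices (p,q): b_{i*} - price of a^{i*} (0 if no accepted bid).\<close>
definition surplus ::
  "('k::finite \<Rightarrow> 'j::finite \<Rightarrow> nat) \<Rightarrow> ('k \<Rightarrow> real) \<Rightarrow> ('k \<Rightarrow> 'i) \<Rightarrow> ('k \<Rightarrow> real)
     \<Rightarrow> 'k cut list \<Rightarrow> ('j \<Rightarrow> real) \<Rightarrow> (nat \<Rightarrow> real) \<Rightarrow> 'i \<Rightarrow> real" where
  "surplus a b bidder xs cs p q i = (\<Sum>k\<in>{k. bidder k = i}. xs k * (b k - bid_price a cs p q k))"

definition walrasian_eq ::
  "('k::finite \<Rightarrow> 'j::finite \<Rightarrow> nat) \<Rightarrow> ('j \<Rightarrow> nat) \<Rightarrow> ('k \<Rightarrow> real) \<Rightarrow> ('k \<Rightarrow> 'i) \<Rightarrow> ('k \<Rightarrow> real)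
     \<Rightarrow> 'k cut list \<Rightarrow> ('j \<Rightarrow> real) \<Rightarrow> (nat \<Rightarrow> real) \<Rightarrow> bool" where
  "walrasian_eq a c b bidder xs cs p q \<longleftrightarrow>
     feasible_alloc a c bidder xs \<and>
     (\<forall>l<length cs. (\<Sum>k\<in>UNIV. fst (cs ! l) k * xs k) \<le> snd (cs ! l)) \<and>
     (\<forall>j. 0 \<le> p j) \<and> (\<forall>l<length cs. 0 \<le> q l) \<and>
     (\<forall>i. 0 \<le> surplus a b bidder xs cs p q i) \<and>
     (\<forall>k. b k \<le> bid_price a cs p q k + surplus a b bidder xs cs p q (bidder k)) \<and>
     (\<forall>j. (\<Sum>k\<in>UNIV. real (a k j) * xs k) < real (c j) \<longrightarrow> p j = 0) \<and>
     (\<forall>l<length cs. (\<Sum>k\<in>UNIV. fst (cs ! l) k * xs k) < snd (cs ! l) \<longrightarrow> q l = 0)"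

end

theory Submission
  imports Defs "HOL-Analysis.Analysis"
begin

definition dotp :: "('k::finite \<Rightarrow> real) \<Rightarrow> ('k \<Rightarrow> real) \<Rightarrow> real" where
  "dotp g x = (\<Sum>k\<in>UNIV. g k * x k)"

definition polyh :: "(('k::finite \<Rightarrow> real) \<times> real) set \<Rightarrow> ('k \<Rightarrow> real) set" where
  "polyh C = {x. \<forall>p\<in>C. dotp (fst p) x \<le> snd p}"

definition act :: "(('k::finite \<Rightarrow> real) \<times> real) set \<Rightarrow> ('k \<Rightarrow> real) \<Rightarrow> (('k \<Rightarrow> real) \<times> real) set" where
  "act C x = {p\<in>C. dotp (fst p) x = snd p}"

lemma dotp_lin: "dotp g (\<lambda>k. x k + t * d k) = dotp g x + t * dotp g d"
  unfolding dotp_def by (simp add: distrib_left sum.distrib sum_distrib_left algebra_simps)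

lemma dotp_comb: "dotp g (\<lambda>k. s * u k + t * w k) = s * dotp g u + t * dotp g w"
  unfolding dotp_def by (simp add: distrib_left sum.distrib sum_distrib_left algebra_simps)

lemma dotp_diff: "dotp g (\<lambda>k. y k - x k) = dotp g y - dotp g x"
  unfolding dotp_def by (simp add: right_diff_distrib sum_subtractf)

lemma vertex_dir_zero:
  fixes C :: "(('k::finite \<Rightarrow> real) \<times> real) set"
  assumes fin: "finite C" and v: "is_vertex (polyh C) x"
    and d: "\<forall>p\<in>act C x. dotp (fst p) d = 0"
  shows "d = (\<lambda>_. 0)"
proof (rule ccontr)
  assume dne: "d \<noteq> (\<lambda>_. 0)"
  have xP: "x \<in> polyh C" using v unfolding is_vertex_def by auto
  define f where "f p = (snd p - dotp (fst p) x) / (\<bar>dotp (fst p) d\<bar> + 1)" for p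
  define E where "E = f ` {p\<in>C. dotp (fst p) x \<noteq> snd p}"
  define e where "e = Min (insert 1 E)"
  have finE: "finite (insert 1 E)" unfolding E_def using fin by auto
  have Epos: "\<forall>a\<in>insert 1 E. 0 < a"
  proof
    fix a assume "a \<in> insert 1 E"
    then show "0 < a"
    proof
      assume "a \<in> E"
      then obtain p where p: "p \<in> C" "dotp (fst p) x \<noteq> snd p" "a = f p" unfolding E_def by auto
      then have "dotp (fst p) x < snd p" using xP unfolding polyh_def by force
      then show ?thesis using p(3) unfolding f_def
        by (simp add: add_pos_nonneg)
    qed simp
  qed
  have epos: "0 < e" unfolding e_def using Min_gr_iff[OF finE] Epos by blast
  have ele: "e \<le> f p" if "p \<in> C" "dotp (fst p) x \<noteq> snd p" for p
    unfolding e_def by (rule Min_le[OF finE]) (use that in \<open>auto simp: E_def\<close>)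
  have inP: "(\<lambda>k. x k + t * d k) \<in> polyh C" if "\<bar>t\<bar> \<le> e" for t
    unfolding polyh_def mem_Collect_eq
  proof (intro ballI)
    fix p assume pC: "p \<in> C"
    show "dotp (fst p) (\<lambda>k. x k + t * d k) \<le> snd p"
    proof (cases "p \<in> act C x")
      case True
      then show ?thesis using d by (simp add: dotp_lin act_def)
    next
      case False
      then have ne: "dotp (fst p) x \<noteq> snd p" using pC by (auto simp: act_def)
      then have lt: "dotp (fst p) x < snd p" using xP pC unfolding polyh_def by force
      have "e \<le> f p" by (rule ele[OF pC ne])
      then have "e * (\<bar>dotp (fst p) d\<bar> + 1) \<le> snd p - dotp (fst p) x"
        unfolding f_def by (simp add: le_divide_eq add_pos_nonneg)
      moreover have "t * dotp (fst p) d \<le> e * \<bar>dotp (fst p) d\<bar>"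
      proof -
        have "t * dotp (fst p) d \<le> \<bar>t\<bar> * \<bar>dotp (fst p) d\<bar>"
          by (metis abs_ge_self abs_mult)
        also have "\<dots> \<le> e * \<bar>dotp (fst p) d\<bar>" using that by (simp add: mult_right_mono)
        finally show ?thesis .
      qed
      ultimately show ?thesis using epos by (simp add: dotp_lin algebra_simps)
    qed
  qed
  define u where "u = (\<lambda>k. x k + (- e) * d k)"
  define w where "w = (\<lambda>k. x k + e * d k)"
  have uP: "u \<in> polyh C" unfolding u_def by (rule inP) (use epos in simp)
  have wP: "w \<in> polyh C" unfolding w_def by (rule inP) (use epos in simp)
  obtain k where "d k \<noteq> 0" using dne by auto
  then have "u \<noteq> w" unfolding u_def w_def using epos by (metis add_left_cancel mult_cancel_right mult_minus_left neg_equal_zero less_irrefl)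
  moreover have "x = (\<lambda>k. (1 - 1/2) * u k + 1/2 * w k)" unfolding u_def w_def by (auto simp: algebra_simps)
  ultimately show False using v uP wP unfolding is_vertex_def
    by (metis (no_types, lifting) field_sum_of_halves half_gt_zero_iff less_add_same_cancel2 zero_less_one)
qed

lemma finite_vertices:
  fixes C :: "(('k::finite \<Rightarrow> real) \<times> real) set"
  assumes fin: "finite C"
  shows "finite {x. is_vertex (polyh C) x}"
proof -
  have "inj_on (act C) {x. is_vertex (polyh C) x}"
  proof (rule inj_onI)
    fix x y assume x: "x \<in> {x. is_vertex (polyh C) x}" and y: "y \<in> {x. is_vertex (polyh C) x}"
      and eq: "act C x = act C y"
    have "(\<lambda>k. y k - x k) = (\<lambda>_. 0)"
    proof (rule vertex_dir_zero[OF fin])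
      show "is_vertex (polyh C) x" using x by simp
      show "\<forall>p\<in>act C x. dotp (fst p) (\<lambda>k. y k - x k) = 0"
      proof
        fix p assume p: "p \<in> act C x"
        then have "p \<in> act C y" using eq by simp
        then show "dotp (fst p) (\<lambda>k. y k - x k) = 0" using p by (simp add: act_def dotp_diff)
      qed
    qed
    then show "x = y" by (metis (no_types) eq_iff_diff_eq_0 ext)
  qed
  moreover have "act C ` {x. is_vertex (polyh C) x} \<subseteq> Pow C" by (auto simp: act_def)
  ultimately show ?thesis using fin by (metis finite_Pow_iff finite_imageD finite_subset)
qed

lemma exists_better_vertex:
  fixes C :: "(('k::finite \<Rightarrow> real) \<times> real) set"
  assumes fin: "finite C" and bnd: "\<forall>y\<in>polyh C. \<forall>k. \<bar>y k\<bar> \<le> B"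
  shows "x \<in> polyh C \<Longrightarrow> \<exists>v. is_vertex (polyh C) v \<and> dotp c x \<le> dotp c v"
proof (induction "card (C - act C x)" arbitrary: x rule: less_induct)
  case less
  show ?case
  proof (cases "is_vertex (polyh C) x")
    case True then show ?thesis by auto
  next
    case False
    then obtain u w t where uP: "u \<in> polyh C" and wP: "w \<in> polyh C" and uw: "u \<noteq> w"
      and t: "0 < t" "t < 1" and xeq: "x = (\<lambda>k. (1 - t) * u k + t * w k)"
      using less.prems unfolding is_vertex_def by blast
    define d0 where "d0 = (\<lambda>k. w k - u k)"
    have d0ne: "d0 \<noteq> (\<lambda>_. 0)" using uw unfolding d0_def by (metis (no_types) eq_iff_diff_eq_0 ext)
    have act0: "dotp (fst p) d0 = 0" if p: "p \<in> act C x" for p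
    proof -
      have pC: "p \<in> C" and eqx: "dotp (fst p) x = snd p" using p by (auto simp: act_def)
      have gu: "dotp (fst p) u \<le> snd p" using uP pC by (auto simp: polyh_def)
      have gw: "dotp (fst p) w \<le> snd p" using wP pC by (auto simp: polyh_def)
      have "dotp (fst p) x = (1 - t) * dotp (fst p) u + t * dotp (fst p) w"
        unfolding xeq by (rule dotp_comb)
      then have sum0: "(1 - t) * (snd p - dotp (fst p) u) + t * (snd p - dotp (fst p) w) = 0"
        using eqx by (simp add: algebra_simps)
      have a1: "0 \<le> (1 - t) * (snd p - dotp (fst p) u)" using t gu by simp
      have a2: "0 \<le> t * (snd p - dotp (fst p) w)" using t gw by simp
      have "t * (snd p - dotp (fst p) w) = 0" using sum0 a1 a2 by linarith
      then have "dotp (fst p) w = snd p" using t by simp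
      moreover have "(1 - t) * (snd p - dotp (fst p) u) = 0" using sum0 a1 a2 by linarith
      then have "dotp (fst p) u = snd p" using t by simp
      ultimately show ?thesis unfolding d0_def by (simp add: dotp_diff)
    qed
    define e where "e = (if 0 \<le> dotp c d0 then d0 else (\<lambda>k. - d0 k))"
    have dotneg: "dotp g (\<lambda>k. - d0 k) = - dotp g d0" for g
      unfolding dotp_def by (simp add: sum_negf)
    have ene: "e \<noteq> (\<lambda>_. 0)" using d0ne unfolding e_def by (auto simp: fun_eq_iff)
    have ce: "0 \<le> dotp c e" unfolding e_def using dotneg by auto
    have acte: "dotp (fst p) e = 0" if "p \<in> act C x" for p
      unfolding e_def using act0[OF that] dotneg by auto
    have xP: "x \<in> polyh C" by (rule less.prems)
    have exS: "\<exists>p\<in>C. 0 < dotp (fst p) e"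
    proof (rule ccontr)
      assume "\<not> ?thesis"
      then have allle: "\<forall>p\<in>C. dotp (fst p) e \<le> 0" by auto
      obtain k where ek: "e k \<noteq> 0" using ene by auto
      define s where "s = (\<bar>B\<bar> + \<bar>x k\<bar> + 1) / \<bar>e k\<bar>"
      have s0: "0 \<le> s" unfolding s_def by simp
      have "(\<lambda>k. x k + s * e k) \<in> polyh C"
        unfolding polyh_def mem_Collect_eq
      proof (intro ballI)
        fix p assume "p \<in> C"
        then show "dotp (fst p) (\<lambda>k. x k + s * e k) \<le> snd p"
          using allle xP s0 unfolding polyh_def dotp_lin
          by (smt (verit, best) mem_Collect_eq mult_nonneg_nonpos)
      qed
      from bnd[rule_format, OF this, of k] have b1: "\<bar>x k + s * e k\<bar> \<le> B" by simp
      have "s * \<bar>e k\<bar> = \<bar>B\<bar> + \<bar>x k\<bar> + 1" unfolding s_def using ek by simp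
      then have "\<bar>s * e k\<bar> = \<bar>B\<bar> + \<bar>x k\<bar> + 1" using s0 by (simp add: abs_mult)
      then show False using b1 by linarith
    qed
    define S where "S = {p\<in>C. 0 < dotp (fst p) e}"
    define ratio where "ratio p = (snd p - dotp (fst p) x) / dotp (fst p) e" for p
    have finS: "finite S" unfolding S_def using fin by auto
    have Sne: "S \<noteq> {}" unfolding S_def using exS by auto
    define s where "s = Min (ratio ` S)"
    have "s \<in> ratio ` S" unfolding s_def using finS Sne by (intro Min_in) auto
    then obtain p0 where p0S: "p0 \<in> S" and p0s: "ratio p0 = s" by auto
    have sle: "s \<le> ratio p" if "p \<in> S" for p
      unfolding s_def using finS that by simp
    have s0: "0 \<le> s"
    proof -
      have "p0 \<in> C" "0 < dotp (fst p0) e" using p0S by (auto simp: S_def)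
      moreover then have "dotp (fst p0) x \<le> snd p0" using xP by (auto simp: polyh_def)
      ultimately show ?thesis using p0s unfolding ratio_def by (metis diff_ge_0_iff_ge divide_nonneg_pos)
    qed
    define y where "y = (\<lambda>k. x k + s * e k)"
    have yP: "y \<in> polyh C"
      unfolding polyh_def mem_Collect_eq
    proof (intro ballI)
      fix p assume pC: "p \<in> C"
      have gx: "dotp (fst p) x \<le> snd p" using xP pC by (auto simp: polyh_def)
      show "dotp (fst p) y \<le> snd p"
      proof (cases "0 < dotp (fst p) e")
        case True
        then have "p \<in> S" using pC by (simp add: S_def)
        then have "s \<le> ratio p" by (rule sle)
        then have "s * dotp (fst p) e \<le> snd p - dotp (fst p) x"
          unfolding ratio_def using True by (simp add: le_divide_eq)
        then show ?thesis unfolding y_def dotp_lin by simp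
      next
        case False
        then have "s * dotp (fst p) e \<le> 0" using s0 by (simp add: mult_nonneg_nonpos)
        then show ?thesis unfolding y_def dotp_lin using gx by simp
      qed
    qed
    have cy: "dotp c x \<le> dotp c y" unfolding y_def dotp_lin using s0 ce by simp
    have sub: "act C x \<subseteq> act C y"
    proof
      fix p assume p: "p \<in> act C x"
      then show "p \<in> act C y" using acte[OF p] unfolding y_def act_def dotp_lin by simp
    qed
    have p0y: "p0 \<in> act C y"
    proof -
      have "p0 \<in> C" and pos: "0 < dotp (fst p0) e" using p0S by (auto simp: S_def)
      moreover have "dotp (fst p0) y = snd p0"
        unfolding y_def dotp_lin p0s[symmetric] ratio_def using pos by simp
      ultimately show ?thesis by (simp add: act_def)
    qed
    have p0x: "p0 \<notin> act C x"
    proof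
      assume "p0 \<in> act C x"
      from acte[OF this] p0S show False by (simp add: S_def)
    qed
    have "C - act C y \<subset> C - act C x"
      using sub p0y p0x p0S by (auto simp: S_def act_def)
    then have "card (C - act C y) < card (C - act C x)"
      using fin by (meson finite_Diff psubset_card_mono)
    from less.hyps[OF this yP] obtain v where "is_vertex (polyh C) v" "dotp c y \<le> dotp c v" by blast
    then show ?thesis using cy by force
  qed
qed

lemma exists_opt_vertex:
  fixes C :: "(('k::finite \<Rightarrow> real) \<times> real) set"
  assumes fin: "finite C" and bnd: "\<forall>y\<in>polyh C. \<forall>k. \<bar>y k\<bar> \<le> B" and ne: "x0 \<in> polyh C"
  shows "\<exists>v. is_vertex (polyh C) v \<and> (\<forall>x\<in>polyh C. dotp c x \<le> dotp c v)"
proof -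
  define V where "V = {x. is_vertex (polyh C) x}"
  have finV: "finite V" unfolding V_def by (rule finite_vertices[OF fin])
  have Vne: "V \<noteq> {}" using exists_better_vertex[OF fin bnd ne] unfolding V_def by auto
  define m where "m = Max (dotp c ` V)"
  have "m \<in> dotp c ` V" unfolding m_def using finV Vne by (intro Max_in) auto
  then obtain v where vV: "v \<in> V" and vm: "dotp c v = m" by auto
  have "dotp c x \<le> dotp c v" if xP: "x \<in> polyh C" for x
  proof -
    obtain v' where "is_vertex (polyh C) v'" "dotp c x \<le> dotp c v'"
      using exists_better_vertex[OF fin bnd xP] by blast
    moreover then have "dotp c v' \<le> m" unfolding m_def using finV by (simp add: V_def)
    ultimately show ?thesis using vm by simp
  qed
  then show ?thesis using vV unfolding V_def by blast
qed


lemma rat_proj: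
  "\<exists>\<psi>::real\<Rightarrow>real. (\<forall>x y. \<psi> (x + y) = \<psi> x + \<psi> y) \<and> (\<forall>q x. \<psi> (of_rat q * x) = of_rat q * \<psi> x)
     \<and> \<psi> 1 = 1 \<and> (\<forall>x. \<psi> x \<in> \<rat>)"
proof -
  interpret Q: vector_space "\<lambda>(q::rat) (x::real). of_rat q * x"
    by unfold_locales (auto simp: algebra_simps of_rat_add of_rat_mult)
  have ind1: "Q.independent {1}"
    by (rule Q.independent_insertI) (auto simp: Q.independent_empty)
  define B where "B = Q.extend_basis {1}"
  have indB: "Q.independent B" unfolding B_def by (rule Q.independent_extend_basis[OF ind1])
  have spB: "Q.span B = UNIV" unfolding B_def by (rule Q.span_extend_basis[OF ind1])
  have oneB: "1 \<in> B" unfolding B_def using Q.extend_basis_superset[OF ind1] by auto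
  define \<psi> :: "real \<Rightarrow> real" where "\<psi> x = of_rat (Q.representation B x 1)" for x
  have "\<psi> (x + y) = \<psi> x + \<psi> y" for x y
    unfolding \<psi>_def using Q.representation_add[OF indB, of y x] spB by (simp add: of_rat_add)
  moreover have "\<psi> (of_rat q * x) = of_rat q * \<psi> x" for q x
    unfolding \<psi>_def using Q.representation_scale[OF indB, of x q] spB by (simp add: of_rat_mult)
  moreover have "\<psi> 1 = 1"
    unfolding \<psi>_def using Q.representation_basis[OF indB oneB] by simp
  moreover have "\<psi> x \<in> \<rat>" for x unfolding \<psi>_def by simp
  ultimately show ?thesis by blast
qed

lemma vertex_rational:
  fixes C :: "(('k::finite \<Rightarrow> real) \<times> real) set"
  assumes fin: "finite C" and v: "is_vertex (polyh C) x"
    and rat: "\<forall>p\<in>C. snd p \<in> \<rat> \<and> (\<forall>k. fst p k \<in> \<rat>)"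
  shows "x k \<in> \<rat>"
proof -
  obtain \<psi> :: "real \<Rightarrow> real" where add: "\<And>x y. \<psi> (x + y) = \<psi> x + \<psi> y"
    and sc: "\<And>q x. \<psi> (of_rat q * x) = of_rat q * \<psi> x" and one: "\<psi> 1 = 1"
    and inQ: "\<And>x. \<psi> x \<in> \<rat>"
    using rat_proj by blast
  have z: "\<psi> 0 = 0" using add[of 0 0] by simp
  have sumf: "\<psi> (sum f A) = (\<Sum>a\<in>A. \<psi> (f a))" for f :: "'k \<Rightarrow> real" and A
    by (induction A rule: infinite_finite_induct) (auto simp: z add)
  have scq: "\<psi> (r * y) = r * \<psi> y" if "r \<in> \<rat>" for r y
    using that sc by (metis Rats_cases)
  have fixq: "\<psi> r = r" if "r \<in> \<rat>" for r
    using scq[OF that, of 1] one by simp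
  define d where "d = (\<lambda>k. \<psi> (x k) - x k)"
  have "d = (\<lambda>_. 0)"
  proof (rule vertex_dir_zero[OF fin v], rule ballI)
    fix p assume p: "p \<in> act C x"
    then have pC: "p \<in> C" and eq: "dotp (fst p) x = snd p" by (auto simp: act_def)
    have "dotp (fst p) (\<lambda>k. \<psi> (x k)) = \<psi> (dotp (fst p) x)"
      unfolding dotp_def sumf using rat pC by (simp add: scq)
    also have "\<dots> = snd p" using eq fixq rat pC by simp
    finally show "dotp (fst p) d = 0" unfolding d_def dotp_diff using eq by simp
  qed
  then have "x k = \<psi> (x k)" unfolding d_def by (metis eq_iff_diff_eq_0)
  then show ?thesis using inQ by metis
qed

lemma least_scale_exists:
  fixes al :: "'k::finite \<Rightarrow> real"
  assumes rat: "\<forall>k. al k \<in> \<rat>" and nz: "al k0 \<noteq> 0"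
  shows "\<exists>g. least_scale al g"
proof -
  obtain den :: "'k \<Rightarrow> int" where den: "\<And>k. den k > 0 \<and> of_int (den k) * al k \<in> \<int>"
  proof -
    have "\<forall>k. \<exists>n::int. n > 0 \<and> of_int n * al k \<in> \<int>"
    proof
      fix k
      obtain q where q: "al k = of_rat q" using rat by (metis Rats_cases)
      obtain a b where ab: "q = Fract a b" "b > 0" by (cases q) auto
      have "of_int b * al k = of_int a"
        using ab q by (simp add: of_rat_rat)
      then show "\<exists>n::int. n > 0 \<and> of_int n * al k \<in> \<int>" using ab(2) by (metis Ints_of_int)
    qed
    then show ?thesis using that by metis
  qed
  define D where "D = (\<Prod>k\<in>UNIV. den k)"
  have Dpos: "D > 0" unfolding D_def using den by (simp add: prod_pos)
  have DZ: "of_int D * al k \<in> \<int>" for k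
  proof -
    have "D = den k * (\<Prod>k'\<in>UNIV - {k}. den k')" unfolding D_def
      by (simp add: prod.remove)
    then have "of_int D * al k = (of_int (den k) * al k) * of_int (\<Prod>k'\<in>UNIV - {k}. den k')"
      by simp
    then show ?thesis using den[of k] by (metis Ints_mult Ints_of_int)
  qed
  define G where "G = {g::real. 1 \<le> g \<and> (\<forall>k. g * al k \<in> \<int>) \<and> g \<le> of_int D}"
  have DG: "of_int D \<in> G" unfolding G_def using Dpos DZ by simp
  have finG: "finite G"
  proof -
    have "inj_on (\<lambda>g. floor (g * al k0)) G"
    proof (rule inj_onI)
      fix g h assume "g \<in> G" "h \<in> G" and eq: "floor (g * al k0) = floor (h * al k0)"
      then have "g * al k0 \<in> \<int>" "h * al k0 \<in> \<int>" unfolding G_def by auto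
      then have "g * al k0 = h * al k0" using eq by (metis floor_of_int Ints_cases)
      then show "g = h" using nz by simp
    qed
    moreover have "(\<lambda>g. floor (g * al k0)) ` G \<subseteq> {-(ceiling (of_int D * \<bar>al k0\<bar>))..ceiling (of_int D * \<bar>al k0\<bar>)}"
    proof
      fix z assume "z \<in> (\<lambda>g. floor (g * al k0)) ` G"
      then obtain g where gG: "g \<in> G" and z: "z = floor (g * al k0)" by auto
      have g: "1 \<le> g" "g \<le> of_int D" using gG unfolding G_def by auto
      have "\<bar>g * al k0\<bar> \<le> of_int D * \<bar>al k0\<bar>" using g by (simp add: abs_mult mult_right_mono)
      then show "z \<in> {-(ceiling (of_int D * \<bar>al k0\<bar>))..ceiling (of_int D * \<bar>al k0\<bar>)}"
        unfolding z by (auto simp: abs_le_iff) (linarith+)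
    qed
    ultimately show ?thesis by (meson finite_atLeastAtMost_int finite_imageD finite_subset)
  qed
  define g where "g = Min G"
  have gG: "g \<in> G" unfolding g_def using finG DG by (intro Min_in) auto
  have "least_scale al g"
    unfolding least_scale_def
  proof (intro conjI allI impI)
    show "1 \<le> g" using gG unfolding G_def by auto
    show "g * al k \<in> \<int>" for k using gG unfolding G_def by auto
    fix g' assume g': "1 \<le> g' \<and> (\<forall>k. g' * al k \<in> \<int>)"
    show "g \<le> g'"
    proof (cases "g' \<le> of_int D")
      case True
      then have "g' \<in> G" using g' unfolding G_def by auto
      then show ?thesis unfolding g_def using finG by simp
    next
      case False
      then show ?thesis using gG unfolding G_def by auto
    qed
  qed
  then show ?thesis by blast
qed


definition unitv :: "'k \<Rightarrow> 'k \<Rightarrow> real" where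
  "unitv k0 = (\<lambda>k. if k = k0 then 1 else 0)"

lemma dotp_unitv[simp]: "dotp (unitv k0) x = x k0"
proof -
  have "(\<Sum>k\<in>UNIV. unitv k0 k * x k) = (\<Sum>k\<in>UNIV. if k = k0 then x k else 0)"
    by (rule sum.cong) (auto simp: unitv_def)
  then show ?thesis unfolding dotp_def by simp
qed

lemma dotp_neg_unitv[simp]: "dotp (\<lambda>k. - unitv k0 k) x = - x k0"
proof -
  have "(\<Sum>k\<in>UNIV. - unitv k0 k * x k) = (\<Sum>k\<in>UNIV. if k = k0 then - x k else 0)"
    by (rule sum.cong) (auto simp: unitv_def)
  then show ?thesis unfolding dotp_def by simp
qed

lemma sum_bidder: "(\<Sum>k\<in>{k. bidder k = i}. (x::'k::finite \<Rightarrow> real) k) = dotp (\<lambda>k. if bidder k = i then 1 else 0) x"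
  unfolding dotp_def
proof -
  have "{k. bidder k = i} = {k\<in>UNIV. bidder k = i}" by simp
  moreover have "(\<Sum>k\<in>UNIV. (if bidder k = i then 1 else 0) * x k) = (\<Sum>k\<in>UNIV. if bidder k = i then x k else 0)"
    by (rule sum.cong) auto
  moreover have "sum x {k\<in>UNIV. bidder k = i} = (\<Sum>k\<in>UNIV. if bidder k = i then x k else 0)"
    by (rule sum.inter_filter) simp
  ultimately show "sum x {k. bidder k = i} = (\<Sum>k\<in>UNIV. (if bidder k = i then 1 else 0) * x k)"
    by simp
qed

lemma finite_01: "finite {x::'k::finite \<Rightarrow> real. \<forall>k. x k \<in> {0,1}}"
proof -
  have "{x::'k \<Rightarrow> real. \<forall>k. x k \<in> {0,1}} = Pi\<^sub>E UNIV (\<lambda>_. {0,1})"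
    by (auto simp: PiE_def extensional_def Pi_def)
  then show ?thesis by (simp add: finite_PiE)
qed

lemma feasible_01: "feasible_alloc a c bidder x \<Longrightarrow> 0 \<le> x k \<and> x k \<le> 1"
proof -
  assume "feasible_alloc a c bidder x"
  then have "x k \<in> {0,1}" unfolding feasible_alloc_def by blast
  then show ?thesis by auto
qed

lemma finite_feasible: "finite {x. feasible_alloc a c bidder x}"
  by (rule finite_subset[OF _ finite_01]) (auto simp: feasible_alloc_def)

lemma unit_feasible:
  assumes "\<forall>k j. a k j \<le> c j"
  shows "feasible_alloc a c bidder (unitv k0)"
  unfolding feasible_alloc_def
proof (intro conjI allI)
  show "unitv k0 k \<in> {0, 1}" for k by (simp add: unitv_def)
  fix j
  have "(\<Sum>k\<in>UNIV. real (a k j) * unitv k0 k) = (\<Sum>k\<in>UNIV. if k = k0 then real (a k0 j) else 0)"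
    by (rule sum.cong) (auto simp: unitv_def)
  then have "(\<Sum>k\<in>UNIV. real (a k j) * unitv k0 k) = real (a k0 j)" by simp
  then show "(\<Sum>k\<in>UNIV. real (a k j) * unitv k0 k) \<le> real (c j)" using assms by simp
next
  fix i
  have "(\<Sum>k\<in>{k. bidder k = i}. unitv k0 k) \<le> (\<Sum>k\<in>UNIV. unitv k0 k)"
    by (rule sum_mono2) (auto simp: unitv_def)
  also have "\<dots> = 1" unfolding unitv_def by simp
  finally show "(\<Sum>k\<in>{k. bidder k = i}. unitv k0 k) \<le> 1" .
qed

lemma dominated_by_maximal:
  assumes fx: "feasible_alloc a c bidder x"
  shows "\<exists>xl. maximal_alloc a c bidder xl \<and> (\<forall>k. x k \<le> xl k)"
proof -
  define F where "F = {y. feasible_alloc a c bidder y \<and> (\<forall>k. x k \<le> y k)}"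
  have finF: "finite F" unfolding F_def by (rule finite_subset[OF _ finite_feasible]) auto
  have xF: "x \<in> F" unfolding F_def using fx by auto
  define m where "m = Max ((\<lambda>y. \<Sum>k\<in>UNIV. y k) ` F)"
  have "m \<in> (\<lambda>y. \<Sum>k\<in>UNIV. y k) ` F" unfolding m_def using finF xF by (intro Max_in) auto
  then obtain y where yF: "y \<in> F" and ym: "(\<Sum>k\<in>UNIV. y k) = m" by auto
  have "maximal_alloc a c bidder y"
    unfolding maximal_alloc_def
  proof (intro conjI allI impI notI)
    show "feasible_alloc a c bidder y" using yF unfolding F_def by auto
    fix k assume yk: "y k = 0" and f1: "feasible_alloc a c bidder (y(k := 1))"
    have yk1: "y(k := 1) \<in> F" using f1 yF feasible_01[OF fx] unfolding F_def by auto
    then have le: "(\<Sum>k'\<in>UNIV. (y(k := 1)) k') \<le> m" unfolding m_def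
      by (intro Max_ge finite_imageI finF) (rule image_eqI[OF _ yk1], rule refl)
    have "(\<Sum>k\<in>UNIV. y k) < (\<Sum>k'\<in>UNIV. (y(k := 1)) k')"
      by (rule sum_strict_mono_ex1) (auto simp: yk)
    then show False using le ym by linarith
  qed
  then show ?thesis using yF unfolding F_def by auto
qed

lemma finite_maximal: "finite {xl. maximal_alloc a c bidder xl}"
  by (rule finite_subset[OF _ finite_feasible]) (auto simp: maximal_alloc_def)

definition C_sep :: "('k::finite \<Rightarrow> 'j::finite \<Rightarrow> nat) \<Rightarrow> ('j \<Rightarrow> nat) \<Rightarrow> ('k \<Rightarrow> 'i) \<Rightarrow> ('k \<Rightarrow> real) \<Rightarrow> (('k \<Rightarrow> real) \<times> real) set" where
  "C_sep a c bidder xs = range (\<lambda>k. ((\<lambda>k'. - unitv k k'), 0))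
     \<union> (\<lambda>xl. ((\<lambda>k. xl k - xs k), 0)) ` {xl. maximal_alloc a c bidder xl}
     \<union> {(xs, 1), ((\<lambda>k. - xs k), -1)}"

lemma finite_C_sep: "finite (C_sep a c bidder xs)"
  unfolding C_sep_def using finite_maximal by auto

lemma dotp_neg: "dotp (\<lambda>k. - g k) x = - dotp g x"
  unfolding dotp_def by (simp add: sum_negf)

lemma mem_polyh_Un: "x \<in> polyh (A \<union> B) \<longleftrightarrow> x \<in> polyh A \<and> x \<in> polyh B"
  unfolding polyh_def by auto

lemma mem_polyh_image: "x \<in> polyh (f ` S) \<longleftrightarrow> (\<forall>s\<in>S. dotp (fst (f s)) x \<le> snd (f s))"
  unfolding polyh_def by auto

lemma mem_polyh_insert: "x \<in> polyh (insert p A) \<longleftrightarrow> dotp (fst p) x \<le> snd p \<and> x \<in> polyh A"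
  unfolding polyh_def by auto

lemma mem_polyh_empty: "x \<in> polyh {}"
  unfolding polyh_def by auto

lemma mem_polyh_set: "x \<in> polyh (set cs) \<longleftrightarrow> (\<forall>p\<in>set cs. dotp (fst p) x \<le> snd p)"
  unfolding polyh_def by auto

lemma sep_feasible_polyh: "sep_feasible a c bidder xs al \<longleftrightarrow> al \<in> polyh (C_sep a c bidder xs)"
proof -
  have e1: "(\<Sum>k\<in>UNIV. al k * (xs k - xl k)) = - dotp (\<lambda>k. xl k - xs k) al" for xl
    unfolding dotp_def by (simp add: sum_negf[symmetric] algebra_simps)
  have e2: "(\<Sum>k\<in>UNIV. al k * xs k) = dotp xs al"
    unfolding dotp_def by (simp add: mult.commute)
  show ?thesis
    unfolding sep_feasible_def C_sep_def mem_polyh_Un mem_polyh_image mem_polyh_insert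
    by (auto simp: e1 e2 dotp_neg mem_polyh_empty)
qed

lemma sep_bounded:
  assumes "al \<in> polyh (C_sep a c bidder xs)" and ac: "\<forall>k j. a k j \<le> c j"
  shows "0 \<le> al k \<and> al k \<le> 1"
proof -
  have sf: "sep_feasible a c bidder xs al" using assms sep_feasible_polyh by blast
  then have nn: "\<forall>k. 0 \<le> al k" and D: "\<forall>xl. maximal_alloc a c bidder xl \<longrightarrow> 0 \<le> (\<Sum>k\<in>UNIV. al k * (xs k - xl k))"
    and one: "(\<Sum>k\<in>UNIV. al k * xs k) = 1" unfolding sep_feasible_def by auto
  obtain xl where ml: "maximal_alloc a c bidder xl" and ge: "\<forall>k'. unitv k k' \<le> xl k'"
    using dominated_by_maximal[OF unit_feasible[OF ac]] by blast
  have fxl: "feasible_alloc a c bidder xl" using ml unfolding maximal_alloc_def by auto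
  have xlk: "xl k = 1" using ge[rule_format, of k] feasible_01[OF fxl, of k] by (simp add: unitv_def)
  have "al k = al k * xl k" using xlk by simp
  also have "\<dots> \<le> (\<Sum>k'\<in>UNIV. al k' * xl k')"
    by (rule member_le_sum) (use nn feasible_01[OF fxl] in auto)
  also have "\<dots> \<le> (\<Sum>k\<in>UNIV. al k * xs k)"
    using D[rule_format, OF ml] by (simp add: right_diff_distrib sum_subtractf)
  finally show ?thesis using nn one by auto
qed

lemma sep_rational:
  assumes "feasible_alloc a c bidder xs"
  shows "\<forall>p\<in>C_sep a c bidder xs. snd p \<in> \<rat> \<and> (\<forall>k. fst p k \<in> \<rat>)"
proof -
  have q01: "v \<in> {0,1} \<Longrightarrow> v \<in> \<rat>" for v :: real by auto
  have xsq: "xs k \<in> \<rat>" for k using assms unfolding feasible_alloc_def using q01 by blast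
  have xlq: "maximal_alloc a c bidder xl \<Longrightarrow> xl k \<in> \<rat>" for xl k
    unfolding maximal_alloc_def feasible_alloc_def using q01 by blast
  have r1: "\<forall>p\<in>range (\<lambda>k. ((\<lambda>k'. - unitv k k'), 0::real)). snd p \<in> \<rat> \<and> (\<forall>k. fst p k \<in> \<rat>)"
    by (auto simp: unitv_def)
  have r2: "\<forall>p\<in>(\<lambda>xl. ((\<lambda>k. xl k - xs k), 0::real)) ` {xl. maximal_alloc a c bidder xl}. snd p \<in> \<rat> \<and> (\<forall>k. fst p k \<in> \<rat>)"
    using xsq xlq by auto
  have r3: "\<forall>p\<in>{(xs, 1::real), ((\<lambda>k. - xs k), -1)}. snd p \<in> \<rat> \<and> (\<forall>k. fst p k \<in> \<rat>)"
    using xsq by auto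
  show ?thesis unfolding C_sep_def ball_Un using r1 r2 r3 by blast
qed

definition C_lp :: "('k::finite \<Rightarrow> 'j::finite \<Rightarrow> nat) \<Rightarrow> ('j \<Rightarrow> nat) \<Rightarrow> ('k \<Rightarrow> 'i::finite) \<Rightarrow> 'k cut list \<Rightarrow> (('k \<Rightarrow> real) \<times> real) set" where
  "C_lp a c bidder cs = range (\<lambda>k. ((\<lambda>k'. - unitv k k'), 0)) \<union> range (\<lambda>k. (unitv k, 1))
     \<union> range (\<lambda>j. ((\<lambda>k. real (a k j)), real (c j)))
     \<union> range (\<lambda>i. ((\<lambda>k. if bidder k = i then 1 else 0), 1)) \<union> set cs"

lemma finite_C_lp: "finite (C_lp a c bidder cs)"
  unfolding C_lp_def by auto

lemma lp_feasible_polyh: "lp_feasible a c bidder cs x \<longleftrightarrow> x \<in> polyh (C_lp a c bidder cs)"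
proof -
  have e1: "(\<Sum>k\<in>UNIV. real (a k j) * x k) = dotp (\<lambda>k. real (a k j)) x" for j
    unfolding dotp_def by simp
  have e3: "(\<forall>l<length cs. (\<Sum>k\<in>UNIV. fst (cs ! l) k * x k) \<le> snd (cs ! l)) \<longleftrightarrow>
      (\<forall>p\<in>set cs. dotp (fst p) x \<le> snd p)"
    unfolding dotp_def by (simp add: all_set_conv_all_nth)
  show ?thesis
    unfolding lp_feasible_def C_lp_def mem_polyh_Un mem_polyh_image mem_polyh_set e3[symmetric]
    by (auto simp: e1 sum_bidder)
qed


locale auc =
  fixes a :: "'k::finite \<Rightarrow> 'j::finite \<Rightarrow> nat" and c :: "'j \<Rightarrow> nat"
    and b :: "'k \<Rightarrow> real" and bidder :: "'k \<Rightarrow> 'i::finite" and xs :: "'k \<Rightarrow> real"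
  assumes c1: "\<forall>j. 1 \<le> c j"
    and ac: "\<forall>k j. a k j \<le> c j"
    and bnn: "\<forall>k. 0 \<le> b k"
    and opt: "wdp_optimal a c b bidder xs"
begin

abbreviation "w \<equiv> (\<Sum>k\<in>UNIV. b k * xs k)"
abbreviation "reach cs \<equiv> (alg_step a c b bidder xs)\<^sup>*\<^sup>* [] cs"

lemma xs_feas: "feasible_alloc a c bidder xs"
  using opt unfolding wdp_optimal_def by auto

lemma w_ge: "feasible_alloc a c bidder x \<Longrightarrow> (\<Sum>k\<in>UNIV. b k * x k) \<le> w"
  using opt unfolding wdp_optimal_def by auto

lemma w_nonneg: "0 \<le> w"
  using bnn feasible_01[OF xs_feas] by (intro sum_nonneg) auto

lemma valid_of_sep:
  assumes sf: "sep_feasible a c bidder xs al" and g: "1 \<le> g"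
  shows "valid_cut a c bidder xs (\<lambda>k. g * al k, g)"
proof -
  have nn: "\<forall>k. 0 \<le> al k" and D: "\<forall>xl. maximal_alloc a c bidder xl \<longrightarrow> 0 \<le> (\<Sum>k\<in>UNIV. al k * (xs k - xl k))"
    and one: "(\<Sum>k\<in>UNIV. al k * xs k) = 1" using sf unfolding sep_feasible_def by auto
  have le1: "(\<Sum>k\<in>UNIV. al k * x k) \<le> 1" if fx: "feasible_alloc a c bidder x" for x
  proof -
    obtain xl where ml: "maximal_alloc a c bidder xl" and ge: "\<forall>k. x k \<le> xl k"
      using dominated_by_maximal[OF fx] by blast
    have "(\<Sum>k\<in>UNIV. al k * x k) \<le> (\<Sum>k\<in>UNIV. al k * xl k)"
      by (rule sum_mono) (use nn ge in \<open>simp add: mult_left_mono\<close>)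
    also have "\<dots> \<le> (\<Sum>k\<in>UNIV. al k * xs k)"
      using D[rule_format, OF ml] by (simp add: right_diff_distrib sum_subtractf)
    finally show ?thesis using one by simp
  qed
  show ?thesis unfolding valid_cut_def fst_conv snd_conv
  proof (intro conjI allI impI)
    show "0 \<le> g * al k" for k using nn g by simp
    fix x assume "feasible_alloc a c bidder x"
    from le1[OF this] have "g * (\<Sum>k\<in>UNIV. al k * x k) \<le> g * 1" using g by (intro mult_left_mono) auto
    then show "(\<Sum>k\<in>UNIV. g * al k * x k) \<le> g" by (simp add: sum_distrib_left mult.assoc)
  next
    show "(\<Sum>k\<in>UNIV. g * al k * xs k) = g" using one by (simp add: sum_distrib_left[symmetric] mult.assoc)
  qed
qed

lemma sep_vertex_feasible: "sep_solution a c bidder xs xf al \<Longrightarrow> sep_feasible a c bidder xs al"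
  unfolding sep_solution_def is_vertex_def by auto

lemma least_scale_ge1: "least_scale al g \<Longrightarrow> 1 \<le> g"
  unfolding least_scale_def by auto

lemma step_valid:
  assumes "alg_step a c b bidder xs cs cs'" "\<forall>ct\<in>set cs. valid_cut a c bidder xs ct"
  shows "\<forall>ct\<in>set cs'. valid_cut a c bidder xs ct"
  using assms unfolding alg_step_def
  by (auto dest!: sep_vertex_feasible least_scale_ge1 intro: valid_of_sep)

lemma reach_valid: "reach cs \<Longrightarrow> \<forall>ct\<in>set cs. valid_cut a c bidder xs ct"
proof (induction rule: rtranclp_induct)
  case base then show ?case by simp
next
  case (step y z) then show ?case using step_valid by blast
qed

lemma xs_lp_feasible:
  assumes "\<forall>ct\<in>set cs. valid_cut a c bidder xs ct"
  shows "lp_feasible a c bidder cs xs"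
proof -
  have f: "feasible_alloc a c bidder xs" by (rule xs_feas)
  have 1: "\<forall>k. 0 \<le> xs k \<and> xs k \<le> 1" using feasible_01[OF f] by auto
  have 2: "\<forall>j. (\<Sum>k\<in>UNIV. real (a k j) * xs k) \<le> real (c j)" using f unfolding feasible_alloc_def by auto
  have 3: "\<forall>i. (\<Sum>k\<in>{k. bidder k = i}. xs k) \<le> 1" using f unfolding feasible_alloc_def by auto
  have 4: "\<forall>l<length cs. (\<Sum>k\<in>UNIV. fst (cs ! l) k * xs k) \<le> snd (cs ! l)"
  proof (intro allI impI)
    fix l assume "l < length cs"
    then have "cs ! l \<in> set cs" by simp
    then show "(\<Sum>k\<in>UNIV. fst (cs ! l) k * xs k) \<le> snd (cs ! l)"
      using assms unfolding valid_cut_def by auto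
  qed
  show ?thesis unfolding lp_feasible_def using 1 2 3 4 by blast
qed

lemma lp_value_eq: "lp_optimal a c b bidder cs xf \<Longrightarrow> lp_value a c b bidder cs = (\<Sum>k\<in>UNIV. b k * xf k)"
  unfolding lp_optimal_def lp_value_def
  by (intro cSup_eq_maximum) auto

lemma lp_bounded: "\<forall>y\<in>polyh (C_lp a c bidder cs). \<forall>k. \<bar>y k\<bar> \<le> 1"
proof (intro ballI allI)
  fix y k assume "y \<in> polyh (C_lp a c bidder cs)"
  then have "lp_feasible a c bidder cs y" using lp_feasible_polyh by blast
  then have "0 \<le> y k \<and> y k \<le> 1" unfolding lp_feasible_def by blast
  then show "\<bar>y k\<bar> \<le> 1" by simp
qed

lemma lp_opt_exists:
  assumes "\<forall>ct\<in>set cs. valid_cut a c bidder xs ct"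
  shows "\<exists>xf. lp_optimal a c b bidder cs xf"
proof -
  have "xs \<in> polyh (C_lp a c bidder cs)" using xs_lp_feasible[OF assms] lp_feasible_polyh by blast
  from exists_opt_vertex[OF finite_C_lp lp_bounded this, of b]
  obtain v where v: "is_vertex (polyh (C_lp a c bidder cs)) v"
    and mx: "\<forall>x\<in>polyh (C_lp a c bidder cs). dotp b x \<le> dotp b v" by blast
  have "v \<in> polyh (C_lp a c bidder cs)" using v unfolding is_vertex_def by auto
  then show ?thesis using mx unfolding lp_optimal_def lp_feasible_polyh dotp_def by blast
qed

lemma w_pos:
  assumes lt: "w < lp_value a c b bidder cs" and xf: "lp_optimal a c b bidder cs xf"
  shows "0 < w"
proof (rule ccontr)
  assume "\<not> 0 < w"
  then have w0: "w = 0" using w_nonneg by simp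
  have "0 < (\<Sum>k\<in>UNIV. b k * xf k)" using lt w0 lp_value_eq[OF xf] by simp
  then obtain k where "0 < b k * xf k" by (metis (no_types, lifting) not_le sum_nonpos)
  moreover have "0 \<le> xf k" "xf k \<le> 1" using xf unfolding lp_optimal_def lp_feasible_def by auto
  ultimately have bk: "0 < b k" using bnn by (metis mult_eq_0_iff order_less_le zero_less_mult_pos2)
  have "(\<Sum>k'\<in>UNIV. b k' * unitv k k') \<le> w" by (rule w_ge[OF unit_feasible[OF ac]])
  moreover have "(\<Sum>k'\<in>UNIV. b k' * unitv k k') = b k"
    using dotp_unitv[of k b] unfolding dotp_def by (simp add: mult.commute)
  ultimately show False using bk w0 by simp
qed

lemma bw_sep:
  assumes wp: "0 < w"
  shows "sep_feasible a c bidder xs (\<lambda>k. b k / w)"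
  unfolding sep_feasible_def
proof (intro conjI allI impI)
  show "0 \<le> b k / w" for k using bnn wp by simp
  fix xl assume "maximal_alloc a c bidder xl"
  then have "(\<Sum>k\<in>UNIV. b k * xl k) \<le> w" using w_ge unfolding maximal_alloc_def by auto
  then have "0 \<le> (\<Sum>k\<in>UNIV. b k * (xs k - xl k))" by (simp add: right_diff_distrib sum_subtractf)
  then have "0 \<le> (\<Sum>k\<in>UNIV. b k * (xs k - xl k)) / w" using wp by simp
  then show "0 \<le> (\<Sum>k\<in>UNIV. b k / w * (xs k - xl k))" by (simp add: sum_divide_distrib)
next
  show "(\<Sum>k\<in>UNIV. b k / w * xs k) = 1" using wp by (simp add: sum_divide_distrib[symmetric])
qed

lemma sep_set: "{be. sep_feasible a c bidder xs be} = polyh (C_sep a c bidder xs)"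
  using sep_feasible_polyh by blast

lemma sep_sol_exists:
  assumes wp: "0 < w"
  shows "\<exists>al. sep_solution a c bidder xs xf al"
proof -
  have ne: "(\<lambda>k. b k / w) \<in> polyh (C_sep a c bidder xs)" using bw_sep[OF wp] sep_feasible_polyh by blast
  have bnd: "\<forall>y\<in>polyh (C_sep a c bidder xs). \<forall>k. \<bar>y k\<bar> \<le> 1" using sep_bounded[OF _ ac] by fastforce
  from exists_opt_vertex[OF finite_C_sep bnd ne, of xf]
  obtain v where v: "is_vertex (polyh (C_sep a c bidder xs)) v"
    and mx: "\<forall>x\<in>polyh (C_sep a c bidder xs). dotp xf x \<le> dotp xf v" by blast
  have "sep_solution a c bidder xs xf v"
    unfolding sep_solution_def sep_set
  proof (intro conjI allI impI)
    show "is_vertex (polyh (C_sep a c bidder xs)) v" by (rule v)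
    fix be assume "sep_feasible a c bidder xs be"
    then have "be \<in> polyh (C_sep a c bidder xs)" using sep_feasible_polyh by blast
    then show "(\<Sum>k\<in>UNIV. be k * xf k) \<le> (\<Sum>k\<in>UNIV. v k * xf k)"
      using mx unfolding dotp_def by (simp add: mult.commute)
  qed
  then show ?thesis by blast
qed

lemma progress:
  assumes r: "reach cs" and lt: "w < lp_value a c b bidder cs"
  shows "\<exists>cs'. alg_step a c b bidder xs cs cs'"
proof -
  obtain xf where xf: "lp_optimal a c b bidder cs xf" using lp_opt_exists[OF reach_valid[OF r]] by blast
  have wp: "0 < w" by (rule w_pos[OF lt xf])
  obtain al where al: "sep_solution a c bidder xs xf al" using sep_sol_exists[OF wp] by blast
  have v: "is_vertex (polyh (C_sep a c bidder xs)) al" using al unfolding sep_solution_def sep_set by auto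
  have rat: "\<forall>k. al k \<in> \<rat>"
    using vertex_rational[OF finite_C_sep v sep_rational[OF xs_feas]] by blast
  have "(\<Sum>k\<in>UNIV. al k * xs k) = 1" using sep_vertex_feasible[OF al] unfolding sep_feasible_def by auto
  then obtain k0 where "al k0 \<noteq> 0" by (metis (no_types, lifting) mult_zero_left sum.neutral zero_neq_one)
  then obtain g where "least_scale al g" using least_scale_exists[OF rat] by blast
  then show ?thesis unfolding alg_step_def using lt xf al by blast
qed

end


context auc
begin

lemma alg_terminates:
  "\<not> (\<exists>f. f 0 = [] \<and> (\<forall>n. alg_step a c b bidder xs (f n) (f (Suc n))))"
proof
  assume "\<exists>f. f 0 = [] \<and> (\<forall>n. alg_step a c b bidder xs (f n) (f (Suc n)))"
  then obtain f where f0: "f 0 = []" and fs: "\<And>n. alg_step a c b bidder xs (f n) (f (Suc n))" by blast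
  have reachf: "reach (f n)" for n
  proof (induction n)
    case 0 then show ?case using f0 by simp
  next
    case (Suc n) then show ?case using fs[of n] by (simp add: rtranclp.rtrancl_into_rtrancl)
  qed
  define P where "P n xf al g \<longleftrightarrow> w < lp_value a c b bidder (f n) \<and> lp_optimal a c b bidder (f n) xf \<and> sep_solution a c bidder xs xf al \<and>
        least_scale al g \<and> f (Suc n) = f n @ [(\<lambda>k. g * al k, g)]" for n xf al g
  have "\<forall>n. \<exists>xf al g. P n xf al g"
    using fs unfolding alg_step_def P_def by blast
  then have "\<exists>XF. \<forall>n. \<exists>al g. P n (XF n) al g" by (rule choice)
  then obtain XF where "\<forall>n. \<exists>al g. P n (XF n) al g" by blast
  then have "\<exists>AL. \<forall>n. \<exists>g. P n (XF n) (AL n) g" by (rule choice)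
  then obtain AL where "\<forall>n. \<exists>g. P n (XF n) (AL n) g" by blast
  then have "\<exists>G. \<forall>n. P n (XF n) (AL n) (G n)" by (rule choice)
  then obtain G where "\<forall>n. P n (XF n) (AL n) (G n)" by blast
  then have st: "\<And>n. w < lp_value a c b bidder (f n) \<and> lp_optimal a c b bidder (f n) (XF n) \<and>
      sep_solution a c bidder xs (XF n) (AL n) \<and> least_scale (AL n) (G n) \<and> f (Suc n) = f n @ [(\<lambda>k. G n * AL n k, G n)]"
    unfolding P_def by blast
  have pref: "\<exists>rest. f m = f (Suc n) @ rest" if "n < m" for n m
    using that
  proof (induction m)
    case 0 then show ?case by simp
  next
    case (Suc m)
    show ?case
    proof (cases "n = m")
      case True then show ?thesis by auto
    next
      case False
      then have "n < m" using Suc.prems by simp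
      then obtain rest where "f m = f (Suc n) @ rest" using Suc.IH by blast
      then show ?thesis using st[of m] by auto
    qed
  qed
  have big: "1 < (\<Sum>k\<in>UNIV. AL m k * XF m k)" for m
  proof -
    have lt: "w < lp_value a c b bidder (f m)" and xf: "lp_optimal a c b bidder (f m) (XF m)"
      and sol: "sep_solution a c bidder xs (XF m) (AL m)" using st[of m] by auto
    have wp: "0 < w" by (rule w_pos[OF lt xf])
    have "(\<Sum>k\<in>UNIV. b k / w * XF m k) \<le> (\<Sum>k\<in>UNIV. AL m k * XF m k)"
      using sol bw_sep[OF wp] unfolding sep_solution_def by blast
    moreover have "(\<Sum>k\<in>UNIV. b k / w * XF m k) = lp_value a c b bidder (f m) / w"
      using lp_value_eq[OF xf] by (simp add: sum_divide_distrib)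
    moreover have "1 < lp_value a c b bidder (f m) / w" using lt wp by simp
    ultimately show ?thesis by linarith
  qed
  have small: "(\<Sum>k\<in>UNIV. AL n k * XF m k) \<le> 1" if nm: "n < m" for n m
  proof -
    obtain rest where fm: "f m = f n @ [(\<lambda>k. G n * AL n k, G n)] @ rest" using pref[OF nm] st[of n] by auto
    have "lp_feasible a c bidder (f m) (XF m)" using st[of m] unfolding lp_optimal_def by auto
    then have "\<forall>p\<in>set (f m). dotp (fst p) (XF m) \<le> snd p"
      unfolding lp_feasible_polyh C_lp_def mem_polyh_Un mem_polyh_set by blast
    moreover have "(\<lambda>k. G n * AL n k, G n) \<in> set (f m)" unfolding fm by simp
    ultimately have "dotp (fst (\<lambda>k. G n * AL n k, G n)) (XF m) \<le> snd (\<lambda>k. G n * AL n k, G n)" by blast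
    then have "dotp (\<lambda>k. G n * AL n k) (XF m) \<le> G n" by simp
    then have "G n * (\<Sum>k\<in>UNIV. AL n k * XF m k) \<le> G n * 1"
      unfolding dotp_def by (simp add: sum_distrib_left mult.assoc)
    moreover have "0 < G n" using least_scale_ge1[of "AL n" "G n"] st[of n] by linarith
    ultimately show ?thesis by simp
  qed
  have inj: "inj AL"
  proof (rule injI)
    fix n m assume eq: "AL n = AL m"
    show "n = m"
    proof (rule ccontr)
      assume "n \<noteq> m"
      then consider "n < m" | "m < n" by linarith
      then show False
      proof cases
        case 1 then show False using small[OF 1] big[of m] eq by simp
      next
        case 2 then show False using small[OF 2] big[of n] eq by simp
      qed
    qed
  qed
  have "range AL \<subseteq> {x. is_vertex (polyh (C_sep a c bidder xs)) x}"
    using st unfolding sep_solution_def sep_set by auto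
  then have "finite (range AL)" using finite_vertices[OF finite_C_sep] finite_subset by blast
  then have "finite (UNIV :: nat set)" using inj finite_imageD by blast
  then show False by simp
qed

end


lemma sum_nonneg_zero_each:
  fixes f :: "'a \<Rightarrow> real"
  assumes "finite A" "\<forall>x\<in>A. 0 \<le> f x" "sum f A = 0" "x \<in> A"
  shows "f x = 0"
  using assms sum_nonneg_eq_0_iff by blast

lemma walras_of_qp:
  fixes a :: "'k::finite \<Rightarrow> 'j::finite \<Rightarrow> nat" and c :: "'j \<Rightarrow> nat"
    and b :: "'k \<Rightarrow> real" and bidder :: "'k \<Rightarrow> 'i::finite" and xs :: "'k \<Rightarrow> real"
  assumes fx: "feasible_alloc a c bidder xs"
    and vc: "\<forall>ct\<in>set cs. valid_cut a c bidder xs ct"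
    and qp: "qp_feasible a c b bidder xs cs p q s"
  shows "walrasian_eq a c b bidder xs cs p q"
proof -
  define L where "L = length cs"
  define pr where "pr k = bid_price a cs p q k" for k
  define A where "A j = (\<Sum>k\<in>UNIV. real (a k j) * xs k)" for j
  define N where "N i = (\<Sum>k\<in>{k. bidder k = i}. xs k)" for i
  have p0: "\<forall>j. 0 \<le> p j" and q0: "\<forall>l<L. 0 \<le> q l" and s0: "\<forall>i. 0 \<le> s i"
    and dual: "\<forall>k. b k \<le> pr k + s (bidder k)"
    and val: "(\<Sum>j\<in>UNIV. p j * real (c j)) + (\<Sum>l<L. q l * snd (cs ! l)) + (\<Sum>i\<in>UNIV. s i) = (\<Sum>k\<in>UNIV. b k * xs k)"
    using qp unfolding qp_feasible_def pr_def L_def by auto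
  have x01: "0 \<le> xs k \<and> xs k \<le> 1" for k using feasible_01[OF fx] .
  have Ac: "A j \<le> real (c j)" for j using fx unfolding feasible_alloc_def A_def by auto
  have N1: "N i \<le> 1" for i using fx unfolding feasible_alloc_def N_def by auto
  have cuteq: "(\<Sum>k\<in>UNIV. fst (cs ! l) k * xs k) = snd (cs ! l)" if "l < L" for l
  proof -
    have "cs ! l \<in> set cs" using that unfolding L_def by simp
    then show ?thesis using vc unfolding valid_cut_def by auto
  qed
  have s1: "(\<Sum>k\<in>UNIV. xs k * pr k) = (\<Sum>j\<in>UNIV. p j * A j) + (\<Sum>l<L. q l * snd (cs ! l))"
  proof -
    have sw1: "(\<Sum>k\<in>UNIV. \<Sum>j\<in>UNIV. p j * (real (a k j) * xs k)) = (\<Sum>j\<in>UNIV. \<Sum>k\<in>UNIV. p j * (real (a k j) * xs k))"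
      by (rule sum.swap)
    have sw2: "(\<Sum>k\<in>UNIV. \<Sum>l<L. q l * (fst (cs ! l) k * xs k)) = (\<Sum>l<L. \<Sum>k\<in>UNIV. q l * (fst (cs ! l) k * xs k))"
      by (rule sum.swap)
    have "(\<Sum>k\<in>UNIV. xs k * pr k) = (\<Sum>k\<in>UNIV. (\<Sum>j\<in>UNIV. p j * (real (a k j) * xs k)) + (\<Sum>l<L. q l * (fst (cs ! l) k * xs k)))"
      unfolding pr_def bid_price_def L_def
      by (rule sum.cong) (auto simp: distrib_left sum_distrib_left sum_distrib_right algebra_simps)
    also have "\<dots> = (\<Sum>k\<in>UNIV. \<Sum>j\<in>UNIV. p j * (real (a k j) * xs k)) + (\<Sum>k\<in>UNIV. \<Sum>l<L. q l * (fst (cs ! l) k * xs k))"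
      by (rule sum.distrib)
    also have "\<dots> = (\<Sum>j\<in>UNIV. \<Sum>k\<in>UNIV. p j * (real (a k j) * xs k)) + (\<Sum>l<L. \<Sum>k\<in>UNIV. q l * (fst (cs ! l) k * xs k))"
      by (simp only: sw1 sw2)
    also have "\<dots> = (\<Sum>j\<in>UNIV. p j * A j) + (\<Sum>l<L. q l * (\<Sum>k\<in>UNIV. fst (cs ! l) k * xs k))"
      unfolding A_def by (simp add: sum_distrib_left)
    also have "\<dots> = (\<Sum>j\<in>UNIV. p j * A j) + (\<Sum>l<L. q l * snd (cs ! l))"
      using cuteq by (intro arg_cong2[where f="(+)"] refl sum.cong) auto
    finally show ?thesis .
  qed
  have s2: "(\<Sum>k\<in>UNIV. xs k * s (bidder k)) = (\<Sum>i\<in>UNIV. s i * N i)"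
  proof -
    have "(\<Sum>k\<in>UNIV. xs k * s (bidder k)) = (\<Sum>i\<in>UNIV. \<Sum>k\<in>{k\<in>UNIV. bidder k = i}. xs k * s (bidder k))"
      by (rule sum.group[symmetric]) auto
    also have "\<dots> = (\<Sum>i\<in>UNIV. \<Sum>k\<in>{k. bidder k = i}. xs k * s i)"
      by (rule sum.cong) (auto intro: sum.cong)
    also have "\<dots> = (\<Sum>i\<in>UNIV. s i * N i)" unfolding N_def sum_distrib_right[symmetric] by (simp add: mult.commute)
    finally show ?thesis .
  qed
  define T1 where "T1 = (\<Sum>k\<in>UNIV. xs k * (pr k + s (bidder k) - b k))"
  define T2 where "T2 = (\<Sum>j\<in>UNIV. p j * (real (c j) - A j))"
  define T3 where "T3 = (\<Sum>i\<in>UNIV. s i * (1 - N i))"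
  have t1: "\<forall>k\<in>UNIV. 0 \<le> xs k * (pr k + s (bidder k) - b k)" using x01 dual by simp
  have t2: "\<forall>j\<in>UNIV. 0 \<le> p j * (real (c j) - A j)" using p0 Ac by simp
  have t3: "\<forall>i\<in>UNIV. 0 \<le> s i * (1 - N i)" using s0 N1 by simp
  have T1e: "T1 = (\<Sum>j\<in>UNIV. p j * A j) + (\<Sum>l<L. q l * snd (cs ! l)) + (\<Sum>i\<in>UNIV. s i * N i) - (\<Sum>k\<in>UNIV. b k * xs k)"
    unfolding T1_def using s1 s2 by (simp add: algebra_simps sum.distrib sum_subtractf)
  have T2e: "T2 = (\<Sum>j\<in>UNIV. p j * real (c j)) - (\<Sum>j\<in>UNIV. p j * A j)"
    unfolding T2_def by (simp add: algebra_simps sum_subtractf)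
  have T3e: "T3 = (\<Sum>i\<in>UNIV. s i) - (\<Sum>i\<in>UNIV. s i * N i)"
    unfolding T3_def by (simp add: algebra_simps sum_subtractf)
  have Tsum: "T1 + T2 + T3 = 0" using T1e T2e T3e val by simp
  have T1n: "0 \<le> T1" unfolding T1_def using t1 by (intro sum_nonneg) auto
  have T2n: "0 \<le> T2" unfolding T2_def using t2 by (intro sum_nonneg) auto
  have T3n: "0 \<le> T3" unfolding T3_def using t3 by (intro sum_nonneg) auto
  have z1: "xs k * (pr k + s (bidder k) - b k) = 0" for k
    using sum_nonneg_zero_each[of UNIV, OF _ t1] Tsum T1n T2n T3n unfolding T1_def by simp
  have z2: "p j * (real (c j) - A j) = 0" for j
    using sum_nonneg_zero_each[of UNIV, OF _ t2] Tsum T1n T2n T3n unfolding T2_def by simp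
  have z3: "s i * (1 - N i) = 0" for i
    using sum_nonneg_zero_each[of UNIV, OF _ t3] Tsum T1n T2n T3n unfolding T3_def by simp
  have surp: "surplus a b bidder xs cs p q i = s i" for i
  proof -
    have "surplus a b bidder xs cs p q i = (\<Sum>k\<in>{k. bidder k = i}. xs k * s i)"
      unfolding surplus_def pr_def[symmetric]
    proof (rule sum.cong)
      fix k assume "k \<in> {k. bidder k = i}"
      then have "bidder k = i" by simp
      then show "xs k * (b k - pr k) = xs k * s i" using z1[of k] by (simp add: algebra_simps)
    qed simp
    also have "\<dots> = s i * N i" unfolding N_def sum_distrib_right[symmetric] by (simp add: mult.commute)
    also have "\<dots> = s i" using z3[of i] by (simp add: algebra_simps)
    finally show ?thesis .
  qed
  show ?thesis
    unfolding walrasian_eq_def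
  proof (intro conjI allI impI)
    show "feasible_alloc a c bidder xs" by (rule fx)
    show "(\<Sum>k\<in>UNIV. fst (cs ! l) k * xs k) \<le> snd (cs ! l)" if "l < length cs" for l
      using cuteq[of l] that unfolding L_def by simp
    show "0 \<le> p j" for j using p0 by simp
    show "0 \<le> q l" if "l < length cs" for l using q0 that unfolding L_def by simp
    show "0 \<le> surplus a b bidder xs cs p q i" for i using surp s0 by simp
    show "b k \<le> bid_price a cs p q k + surplus a b bidder xs cs p q (bidder k)" for k
      using dual surp unfolding pr_def by simp
    show "p j = 0" if "(\<Sum>k\<in>UNIV. real (a k j) * xs k) < real (c j)" for j
      using z2[of j] that unfolding A_def by simp
    show "q l = 0" if "l < length cs" "(\<Sum>k\<in>UNIV. fst (cs ! l) k * xs k) < snd (cs ! l)" for l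
      using cuteq[of l] that unfolding L_def by simp
  qed
qed


lemma sum_image_rep:
  fixes gen :: "'r \<Rightarrow> 'v::real_vector" and F :: "'v \<Rightarrow> real"
  assumes "finite R" and nn: "\<forall>v\<in>gen ` R. 0 \<le> F v"
  shows "\<exists>y. (\<forall>r\<in>R. 0 \<le> y r) \<and> (\<Sum>r\<in>R. y r *\<^sub>R gen r) = (\<Sum>v\<in>gen ` R. F v *\<^sub>R v)"
  using assms
proof (induction R rule: finite_induct)
  case empty then show ?case by simp
next
  case (insert r R)
  from insert.prems have nn': "\<forall>v\<in>gen ` R. 0 \<le> F v" by auto
  from insert.IH[OF nn'] obtain y where y0: "\<forall>r\<in>R. 0 \<le> y r"
    and ys: "(\<Sum>r\<in>R. y r *\<^sub>R gen r) = (\<Sum>v\<in>gen ` R. F v *\<^sub>R v)" by blast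
  show ?case
  proof (cases "gen r \<in> gen ` R")
    case True
    define y' where "y' = y(r := 0)"
    have "(\<Sum>r'\<in>insert r R. y' r' *\<^sub>R gen r') = (\<Sum>r'\<in>R. y' r' *\<^sub>R gen r')"
      using insert.hyps by (simp add: y'_def)
    also have "\<dots> = (\<Sum>r'\<in>R. y r' *\<^sub>R gen r')"
      using insert.hyps by (intro sum.cong) (auto simp: y'_def)
    also have "\<dots> = (\<Sum>v\<in>gen ` insert r R. F v *\<^sub>R v)" using ys True by (simp add: insert_absorb)
    finally have e: "(\<Sum>r'\<in>insert r R. y' r' *\<^sub>R gen r') = (\<Sum>v\<in>gen ` insert r R. F v *\<^sub>R v)" .
    have "\<forall>r'\<in>insert r R. 0 \<le> y' r'" using y0 by (auto simp: y'_def)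
    then show ?thesis using e by blast
  next
    case False
    define y' where "y' = y(r := F (gen r))"
    have "(\<Sum>r'\<in>insert r R. y' r' *\<^sub>R gen r') = F (gen r) *\<^sub>R gen r + (\<Sum>r'\<in>R. y' r' *\<^sub>R gen r')"
      using insert.hyps by (simp add: y'_def)
    also have "(\<Sum>r'\<in>R. y' r' *\<^sub>R gen r') = (\<Sum>r'\<in>R. y r' *\<^sub>R gen r')"
      using insert.hyps by (intro sum.cong) (auto simp: y'_def)
    also have "F (gen r) *\<^sub>R gen r + (\<Sum>r\<in>R. y r *\<^sub>R gen r) = (\<Sum>v\<in>gen ` insert r R. F v *\<^sub>R v)"
      using ys False insert.hyps by simp
    finally have e: "(\<Sum>r'\<in>insert r R. y' r' *\<^sub>R gen r') = (\<Sum>v\<in>gen ` insert r R. F v *\<^sub>R v)" .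
    have "\<forall>r'\<in>insert r R. 0 \<le> y' r'" using y0 insert.prems by (auto simp: y'_def)
    then show ?thesis using e by blast
  qed
qed

lemma farkas_cone:
  fixes gen :: "'r \<Rightarrow> real ^ 'n" and z :: "real ^ 'n"
  assumes fin: "finite R"
    and H: "\<And>v. (\<forall>r\<in>R. 0 \<le> inner v (gen r)) \<Longrightarrow> 0 \<le> inner v z"
  shows "\<exists>y. (\<forall>r\<in>R. 0 \<le> y r) \<and> z = (\<Sum>r\<in>R. y r *\<^sub>R gen r)"
proof (cases "R = {}")
  case True
  have "0 \<le> inner (- z) z" using H[of "- z"] True by simp
  then have "inner z z \<le> 0" by simp
  then have "z = 0" by (metis inner_gt_zero_iff not_le)
  then show ?thesis using True by simp
next
  case Rne: False
  define K where "K = conic hull (convex hull (gen ` R))"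
  have clK: "closed K" unfolding K_def
    by (rule closed_conic_hull_strong) (simp add: polytope_convex_hull fin)
  have cvK: "convex K" unfolding K_def by (intro convex_conic_hull convex_convex_hull)
  have genK: "c *\<^sub>R gen r \<in> K" if "r \<in> R" "0 \<le> c" for r c
  proof -
    have "gen r \<in> convex hull (gen ` R)" using that by (simp add: hull_inc)
    then show ?thesis unfolding K_def conic_hull_explicit using that by blast
  qed
  have zK: "z \<in> K"
  proof (rule ccontr)
    assume "z \<notin> K"
    from separating_hyperplane_closed_point[OF cvK clK this]
    obtain v \<beta> where vz: "inner v z < \<beta>" and vK: "\<forall>x\<in>K. \<beta> < inner v x" by blast
    obtain r0 where r0: "r0 \<in> R" using Rne by blast
    have "\<beta> < 0" using vK genK[OF r0, of 0] by fastforce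
    have "0 \<le> inner v (gen r)" if rR: "r \<in> R" for r
    proof (rule ccontr)
      assume "\<not> 0 \<le> inner v (gen r)"
      then have neg: "inner v (gen r) < 0" by simp
      define c where "c = \<beta> / inner v (gen r)"
      have c0: "0 \<le> c" unfolding c_def using neg \<open>\<beta> < 0\<close> by (simp add: divide_nonpos_neg)
      have "\<beta> < inner v (c *\<^sub>R gen r)" using vK genK[OF rR c0] by blast
      also have "\<dots> = \<beta>" unfolding c_def using neg by simp
      finally show False by simp
    qed
    then have "0 \<le> inner v z" using H by blast
    then show False using vz \<open>\<beta> < 0\<close> by simp
  qed
  then obtain c u where c0: "0 \<le> c" and u: "u \<in> convex hull (gen ` R)" and zu: "z = c *\<^sub>R u"
    unfolding K_def conic_hull_explicit by blast
  obtain \<mu> where \<mu>0: "\<forall>x\<in>gen ` R. 0 \<le> \<mu> x" and uu: "(\<Sum>x\<in>gen ` R. \<mu> x *\<^sub>R x) = u"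
    using u unfolding convex_hull_finite[OF finite_imageI[OF fin]] by blast
  have "\<forall>v\<in>gen ` R. 0 \<le> c * \<mu> v" using \<mu>0 c0 by simp
  from sum_image_rep[OF fin this] obtain y where y0: "\<forall>r\<in>R. 0 \<le> y r"
    and ys: "(\<Sum>r\<in>R. y r *\<^sub>R gen r) = (\<Sum>v\<in>gen ` R. (c * \<mu> v) *\<^sub>R v)" by blast
  have "(\<Sum>v\<in>gen ` R. (c * \<mu> v) *\<^sub>R v) = c *\<^sub>R u"
    unfolding uu[symmetric] scaleR_sum_right by (simp add: scaleR_scaleR)
  then show ?thesis using y0 ys zu by auto
qed


lemma sum_UNIV_option: "(\<Sum>u\<in>(UNIV :: 'k::finite option set). f u) = f None + (\<Sum>k\<in>UNIV. f (Some k))"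
proof -
  have U: "(UNIV :: 'k option set) = insert None (range Some)" by (auto intro: option.exhaust)
  have "None \<notin> range Some" by auto
  then show ?thesis unfolding U by (simp add: sum.reindex)
qed

lemma dual_ge:
  fixes a :: "'k::finite \<Rightarrow> 'j::finite \<Rightarrow> nat" and c :: "'j \<Rightarrow> nat"
    and b :: "'k \<Rightarrow> real" and bidder :: "'k \<Rightarrow> 'i::finite" and xs :: "'k \<Rightarrow> real"
  assumes fx: "feasible_alloc a c bidder xs"
    and vc: "\<forall>ct\<in>set cs. valid_cut a c bidder xs ct"
    and p0: "\<forall>j. 0 \<le> p j" and q0: "\<forall>l<length cs. 0 \<le> q l" and s0: "\<forall>i. 0 \<le> s i"
    and dual: "\<forall>k. b k \<le> bid_price a cs p q k + s (bidder k)"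
  shows "(\<Sum>k\<in>UNIV. b k * xs k) \<le> (\<Sum>j\<in>UNIV. p j * real (c j)) + (\<Sum>l<length cs. q l * snd (cs ! l)) + (\<Sum>i\<in>UNIV. s i)"
proof -
  define L where "L = length cs"
  define pr where "pr k = bid_price a cs p q k" for k
  define A where "A j = (\<Sum>k\<in>UNIV. real (a k j) * xs k)" for j
  define N where "N i = (\<Sum>k\<in>{k. bidder k = i}. xs k)" for i
  have x01: "0 \<le> xs k \<and> xs k \<le> 1" for k using feasible_01[OF fx] .
  have Ac: "A j \<le> real (c j)" for j using fx unfolding feasible_alloc_def A_def by auto
  have N1: "N i \<le> 1" for i using fx unfolding feasible_alloc_def N_def by auto
  have cuteq: "(\<Sum>k\<in>UNIV. fst (cs ! l) k * xs k) = snd (cs ! l)" if "l < L" for l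
  proof -
    have "cs ! l \<in> set cs" using that unfolding L_def by simp
    then show ?thesis using vc unfolding valid_cut_def by auto
  qed
  have s1: "(\<Sum>k\<in>UNIV. xs k * pr k) = (\<Sum>j\<in>UNIV. p j * A j) + (\<Sum>l<L. q l * snd (cs ! l))"
  proof -
    have sw1: "(\<Sum>k\<in>UNIV. \<Sum>j\<in>UNIV. p j * (real (a k j) * xs k)) = (\<Sum>j\<in>UNIV. \<Sum>k\<in>UNIV. p j * (real (a k j) * xs k))"
      by (rule sum.swap)
    have sw2: "(\<Sum>k\<in>UNIV. \<Sum>l<L. q l * (fst (cs ! l) k * xs k)) = (\<Sum>l<L. \<Sum>k\<in>UNIV. q l * (fst (cs ! l) k * xs k))"
      by (rule sum.swap)
    have "(\<Sum>k\<in>UNIV. xs k * pr k) = (\<Sum>k\<in>UNIV. (\<Sum>j\<in>UNIV. p j * (real (a k j) * xs k)) + (\<Sum>l<L. q l * (fst (cs ! l) k * xs k)))"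
      unfolding pr_def bid_price_def L_def
      by (rule sum.cong) (auto simp: distrib_left sum_distrib_left sum_distrib_right algebra_simps)
    also have "\<dots> = (\<Sum>k\<in>UNIV. \<Sum>j\<in>UNIV. p j * (real (a k j) * xs k)) + (\<Sum>k\<in>UNIV. \<Sum>l<L. q l * (fst (cs ! l) k * xs k))"
      by (rule sum.distrib)
    also have "\<dots> = (\<Sum>j\<in>UNIV. \<Sum>k\<in>UNIV. p j * (real (a k j) * xs k)) + (\<Sum>l<L. \<Sum>k\<in>UNIV. q l * (fst (cs ! l) k * xs k))"
      by (simp only: sw1 sw2)
    also have "\<dots> = (\<Sum>j\<in>UNIV. p j * A j) + (\<Sum>l<L. q l * (\<Sum>k\<in>UNIV. fst (cs ! l) k * xs k))"
      unfolding A_def by (simp add: sum_distrib_left)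
    also have "\<dots> = (\<Sum>j\<in>UNIV. p j * A j) + (\<Sum>l<L. q l * snd (cs ! l))"
      using cuteq by (intro arg_cong2[where f="(+)"] refl sum.cong) auto
    finally show ?thesis .
  qed
  have s2: "(\<Sum>k\<in>UNIV. xs k * s (bidder k)) = (\<Sum>i\<in>UNIV. s i * N i)"
  proof -
    have "(\<Sum>k\<in>UNIV. xs k * s (bidder k)) = (\<Sum>i\<in>UNIV. \<Sum>k\<in>{k\<in>UNIV. bidder k = i}. xs k * s (bidder k))"
      by (rule sum.group[symmetric]) auto
    also have "\<dots> = (\<Sum>i\<in>UNIV. \<Sum>k\<in>{k. bidder k = i}. xs k * s i)"
      by (rule sum.cong) (auto intro: sum.cong)
    also have "\<dots> = (\<Sum>i\<in>UNIV. s i * N i)" unfolding N_def sum_distrib_right[symmetric] by (simp add: mult.commute)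
    finally show ?thesis .
  qed
  define T1 where "T1 = (\<Sum>k\<in>UNIV. xs k * (pr k + s (bidder k) - b k))"
  define T2 where "T2 = (\<Sum>j\<in>UNIV. p j * (real (c j) - A j))"
  define T3 where "T3 = (\<Sum>i\<in>UNIV. s i * (1 - N i))"
  have t1: "\<forall>k\<in>UNIV. 0 \<le> xs k * (pr k + s (bidder k) - b k)" using x01 dual unfolding pr_def by simp
  have t2: "\<forall>j\<in>UNIV. 0 \<le> p j * (real (c j) - A j)" using p0 Ac by simp
  have t3: "\<forall>i\<in>UNIV. 0 \<le> s i * (1 - N i)" using s0 N1 by simp
  have T1e: "T1 = (\<Sum>j\<in>UNIV. p j * A j) + (\<Sum>l<L. q l * snd (cs ! l)) + (\<Sum>i\<in>UNIV. s i * N i) - (\<Sum>k\<in>UNIV. b k * xs k)"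
    unfolding T1_def using s1 s2 by (simp add: algebra_simps sum.distrib sum_subtractf)
  have T2e: "T2 = (\<Sum>j\<in>UNIV. p j * real (c j)) - (\<Sum>j\<in>UNIV. p j * A j)"
    unfolding T2_def by (simp add: algebra_simps sum_subtractf)
  have T3e: "T3 = (\<Sum>i\<in>UNIV. s i) - (\<Sum>i\<in>UNIV. s i * N i)"
    unfolding T3_def by (simp add: algebra_simps sum_subtractf)
  have T1n: "0 \<le> T1" unfolding T1_def using t1 by (intro sum_nonneg) auto
  have T2n: "0 \<le> T2" unfolding T2_def using t2 by (intro sum_nonneg) auto
  have T3n: "0 \<le> T3" unfolding T3_def using t3 by (intro sum_nonneg) auto
  show ?thesis using T1e T2e T3e T1n T2n T3n unfolding L_def by linarith
qed


lemma inner_opt: "inner (v :: real^('k::finite option)) u = v$None * u$None + (\<Sum>k\<in>UNIV. v$(Some k) * u$(Some k))"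
  unfolding inner_vec_def sum_UNIV_option by (simp add: inner_real_def)

lemma sum_R4:
  fixes f :: "'j::finite + ('i::finite + (nat + 'k::finite option)) \<Rightarrow> real"
  shows "sum f (UNIV <+> (UNIV <+> ({..<L} <+> UNIV))) =
    (\<Sum>j\<in>UNIV. f (Inl j)) + ((\<Sum>i\<in>UNIV. f (Inr (Inl i))) + ((\<Sum>l<L. f (Inr (Inr (Inl l)))) + (\<Sum>u\<in>UNIV. f (Inr (Inr (Inr u))))))"
  by (simp add: sum.Plus comp_def)

lemma sum_mult_delta: "(\<Sum>k'\<in>(UNIV::'k::finite set). f k' * (if k' = k then d else 0)) = f k * (d::real)"
proof -
  have "(\<Sum>k'\<in>UNIV. f k' * (if k' = k then d else 0)) = (\<Sum>k'\<in>UNIV. if k' = k then f k' * d else 0)"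
    by (rule sum.cong) auto
  then show ?thesis by simp
qed

context auc
begin

lemma qp_feas_exists:
  assumes r: "reach cs" and nlt: "\<not> w < lp_value a c b bidder cs"
  shows "\<exists>p q s. qp_feasible a c b bidder xs cs p q s"
proof -
  have vc: "\<forall>ct\<in>set cs. valid_cut a c bidder xs ct" by (rule reach_valid[OF r])
  obtain xf where xf: "lp_optimal a c b bidder cs xf" using lp_opt_exists[OF vc] by blast
  have lpw: "(\<Sum>k\<in>UNIV. b k * y k) \<le> w" if "lp_feasible a c bidder cs y" for y
  proof -
    have "(\<Sum>k\<in>UNIV. b k * y k) \<le> (\<Sum>k\<in>UNIV. b k * xf k)" using xf that unfolding lp_optimal_def by blast
    also have "\<dots> = lp_value a c b bidder cs" using lp_value_eq[OF xf] by simp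
    finally show ?thesis using nlt by simp
  qed
  define L where "L = length cs"
  define R :: "('j + ('i + (nat + 'k option))) set" where "R = UNIV <+> (UNIV <+> ({..<L} <+> UNIV))"
  define gen :: "('j + ('i + (nat + 'k option))) \<Rightarrow> real^('k option)" where
    "gen r = (case r of Inl j \<Rightarrow> (\<chi> u. case u of Some k \<Rightarrow> real (a k j) | None \<Rightarrow> real (c j))
        | Inr (Inl i) \<Rightarrow> (\<chi> u. case u of Some k \<Rightarrow> (if bidder k = i then 1 else 0) | None \<Rightarrow> 1)
        | Inr (Inr (Inl l)) \<Rightarrow> (\<chi> u. case u of Some k \<Rightarrow> fst (cs ! l) k | None \<Rightarrow> snd (cs ! l))
        | Inr (Inr (Inr u')) \<Rightarrow> (\<chi> u. if u = u' then (case u of Some k \<Rightarrow> -1 | None \<Rightarrow> 1) else 0))" for r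
  define z :: "real^('k option)" where "z = (\<chi> u. case u of Some k \<Rightarrow> b k | None \<Rightarrow> w)"
  have finR: "finite R" unfolding R_def by simp
  have H: "0 \<le> inner v z" if hv: "\<forall>r\<in>R. 0 \<le> inner v (gen r)" for v
  proof -
    define x where "x k = - v$(Some k)" for k
    define \<tau> where "\<tau> = v$None"
    have x0: "0 \<le> x k" for k
    proof -
      have "Inr (Inr (Inr (Some k))) \<in> R" unfolding R_def by auto
      then have "0 \<le> inner v (gen (Inr (Inr (Inr (Some k)))))" using hv by blast
      moreover have "inner v (gen (Inr (Inr (Inr (Some k))))) = - v$(Some k)"
        unfolding inner_opt gen_def by (simp add: sum_mult_delta cong: if_cong)
      ultimately show ?thesis unfolding x_def by simp
    qed
    have t0: "0 \<le> \<tau>"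
    proof -
      have "Inr (Inr (Inr None)) \<in> R" unfolding R_def by auto
      then have "0 \<le> inner v (gen (Inr (Inr (Inr None))))" using hv by blast
      moreover have "inner v (gen (Inr (Inr (Inr None)))) = \<tau>"
        unfolding inner_opt gen_def \<tau>_def by simp
      ultimately show ?thesis by simp
    qed
    have rowj: "(\<Sum>k\<in>UNIV. real (a k j) * x k) \<le> \<tau> * real (c j)" for j
    proof -
      have "Inl j \<in> R" unfolding R_def by auto
      then have "0 \<le> inner v (gen (Inl j))" using hv by blast
      moreover have "inner v (gen (Inl j)) = \<tau> * real (c j) - (\<Sum>k\<in>UNIV. real (a k j) * x k)"
        unfolding inner_opt gen_def \<tau>_def x_def by (simp add: sum_negf algebra_simps)
      ultimately show ?thesis by simp
    qed
    have rowi: "(\<Sum>k\<in>UNIV. (if bidder k = i then 1 else 0) * x k) \<le> \<tau>" for i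
    proof -
      have "Inr (Inl i) \<in> R" unfolding R_def by auto
      then have "0 \<le> inner v (gen (Inr (Inl i)))" using hv by blast
      moreover have "inner v (gen (Inr (Inl i))) = \<tau> - (\<Sum>k\<in>UNIV. (if bidder k = i then 1 else 0) * x k)"
        unfolding inner_opt gen_def \<tau>_def x_def by (simp add: sum_negf algebra_simps)
      ultimately show ?thesis by simp
    qed
    have rowl: "(\<Sum>k\<in>UNIV. fst (cs ! l) k * x k) \<le> \<tau> * snd (cs ! l)" if lL: "l < L" for l
    proof -
      have "Inr (Inr (Inl l)) \<in> R" unfolding R_def using lL by auto
      then have "0 \<le> inner v (gen (Inr (Inr (Inl l))))" using hv by blast
      moreover have "inner v (gen (Inr (Inr (Inl l)))) = \<tau> * snd (cs ! l) - (\<Sum>k\<in>UNIV. fst (cs ! l) k * x k)"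
        unfolding inner_opt gen_def \<tau>_def x_def by (simp add: sum_negf algebra_simps)
      ultimately show ?thesis by simp
    qed
    have vz: "inner v z = \<tau> * w - (\<Sum>k\<in>UNIV. b k * x k)"
      unfolding inner_opt z_def \<tau>_def x_def by (simp add: sum_negf algebra_simps)
    have xk_le: "x k \<le> \<tau>" for k
    proof -
      have "x k = (if bidder k = bidder k then 1 else 0) * x k" by simp
      also have "\<dots> \<le> (\<Sum>k'\<in>UNIV. (if bidder k' = bidder k then 1 else 0) * x k')"
        by (rule member_le_sum) (use x0 in auto)
      also have "\<dots> \<le> \<tau>" by (rule rowi)
      finally show ?thesis .
    qed
    show ?thesis
    proof (cases "\<tau> = 0")
      case True
      then have "x k = 0" for k using xk_le[of k] x0[of k] by simp
      then show ?thesis unfolding vz using True by simp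
    next
      case False
      then have tp: "0 < \<tau>" using t0 by simp
      define y where "y k = x k / \<tau>" for k
      have f1: "\<forall>k. 0 \<le> y k \<and> y k \<le> 1" unfolding y_def using x0 xk_le tp by simp
      have f2: "\<forall>j. (\<Sum>k\<in>UNIV. real (a k j) * y k) \<le> real (c j)"
      proof
        fix j
        have "(\<Sum>k\<in>UNIV. real (a k j) * y k) = (\<Sum>k\<in>UNIV. real (a k j) * x k) / \<tau>"
          unfolding y_def by (simp add: sum_divide_distrib)
        then show "(\<Sum>k\<in>UNIV. real (a k j) * y k) \<le> real (c j)" using rowj[of j] tp by (simp add: divide_le_eq mult.commute)
      qed
      have f3: "\<forall>i. (\<Sum>k\<in>{k. bidder k = i}. y k) \<le> 1"
      proof
        fix i
        have "(\<Sum>k\<in>{k. bidder k = i}. y k) = (\<Sum>k\<in>UNIV. (if bidder k = i then 1 else 0) * x k) / \<tau>"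
          unfolding sum_bidder dotp_def y_def by (simp add: sum_divide_distrib)
        then show "(\<Sum>k\<in>{k. bidder k = i}. y k) \<le> 1" using rowi[of i] tp by (simp add: divide_le_eq)
      qed
      have f4: "\<forall>l<length cs. (\<Sum>k\<in>UNIV. fst (cs ! l) k * y k) \<le> snd (cs ! l)"
      proof (intro allI impI)
        fix l assume "l < length cs"
        then have lL: "l < L" unfolding L_def .
        have "(\<Sum>k\<in>UNIV. fst (cs ! l) k * y k) = (\<Sum>k\<in>UNIV. fst (cs ! l) k * x k) / \<tau>"
          unfolding y_def by (simp add: sum_divide_distrib)
        then show "(\<Sum>k\<in>UNIV. fst (cs ! l) k * y k) \<le> snd (cs ! l)"
          using rowl[OF lL] tp by (simp add: divide_le_eq mult.commute)
      qed
      have yf: "lp_feasible a c bidder cs y"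
        unfolding lp_feasible_def using f1 f2 f3 f4 by blast
      have "(\<Sum>k\<in>UNIV. b k * y k) = (\<Sum>k\<in>UNIV. b k * x k) / \<tau>"
        unfolding y_def by (simp add: sum_divide_distrib)
      then have "(\<Sum>k\<in>UNIV. b k * x k) / \<tau> \<le> w" using lpw[OF yf] by simp
      then have "(\<Sum>k\<in>UNIV. b k * x k) \<le> \<tau> * w" using tp by (simp add: divide_le_eq mult.commute)
      then show ?thesis unfolding vz by simp
    qed
  qed
  obtain y where y0: "\<forall>r\<in>R. 0 \<le> y r" and zy: "z = (\<Sum>r\<in>R. y r *\<^sub>R gen r)"
    using farkas_cone[OF finR H] by blast
  define p where "p j = y (Inl j)" for j
  define s where "s i = y (Inr (Inl i))" for i
  define q where "q l = y (Inr (Inr (Inl l)))" for l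
  define t where "t u = y (Inr (Inr (Inr u)))" for u
  have comp: "z$u = (\<Sum>j\<in>UNIV. p j * gen (Inl j) $ u) + ((\<Sum>i\<in>UNIV. s i * gen (Inr (Inl i)) $ u)
      + ((\<Sum>l<L. q l * gen (Inr (Inr (Inl l))) $ u) + (\<Sum>u'\<in>UNIV. t u' * gen (Inr (Inr (Inr u'))) $ u)))" for u
    unfolding zy sum_component vector_scaleR_component R_def sum_R4 p_def s_def q_def t_def by simp
  have g1: "gen (Inl j) $ Some k = real (a k j)" "gen (Inl j) $ None = real (c j)" for j k
    unfolding gen_def by simp_all
  have g2: "gen (Inr (Inl i)) $ Some k = (if bidder k = i then 1 else 0)" "gen (Inr (Inl i)) $ None = 1" for i k
    unfolding gen_def by simp_all
  have g3: "gen (Inr (Inr (Inl l))) $ Some k = fst (cs ! l) k" "gen (Inr (Inr (Inl l))) $ None = snd (cs ! l)" for l k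
    unfolding gen_def by simp_all
  have g4: "gen (Inr (Inr (Inr u'))) $ Some k = (if u' = Some k then -1 else 0)"
    "gen (Inr (Inr (Inr u'))) $ None = (if u' = None then 1 else 0)" for u' k
    unfolding gen_def by auto
  have zc: "z $ Some k = b k" "z $ None = w" for k unfolding z_def by simp_all
  have p0: "\<forall>j. 0 \<le> p j" using y0 unfolding p_def R_def by auto
  have s0: "\<forall>i. 0 \<le> s i" using y0 unfolding s_def R_def by auto
  have q0: "\<forall>l<length cs. 0 \<le> q l" using y0 unfolding q_def R_def L_def by auto
  have tt0: "0 \<le> t u" for u using y0 unfolding t_def R_def by auto
  have dual: "\<forall>k. b k \<le> bid_price a cs p q k + s (bidder k)"
  proof
    fix k
    have "b k = (\<Sum>j\<in>UNIV. p j * real (a k j)) + ((\<Sum>i\<in>UNIV. s i * (if bidder k = i then 1 else 0))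
      + ((\<Sum>l<L. q l * fst (cs ! l) k) + (\<Sum>u'\<in>UNIV. t u' * (if u' = Some k then -1 else 0))))"
      using comp[of "Some k"] by (simp only: g1 g2 g3 g4 zc)
    also have "(\<Sum>i\<in>UNIV. s i * (if bidder k = i then 1 else 0)) = s (bidder k)"
    proof -
      have "(\<Sum>i\<in>UNIV. s i * (if bidder k = i then 1 else 0)) = (\<Sum>i\<in>UNIV. if i = bidder k then s i else 0)"
        by (rule sum.cong) auto
      then show ?thesis by simp
    qed
    also have "(\<Sum>u'\<in>UNIV. t u' * (if u' = Some k then -1 else 0)) = - t (Some k)"
    proof -
      have "(\<Sum>u'\<in>UNIV. t u' * (if u' = Some k then -1 else 0)) = (\<Sum>u'\<in>UNIV. if u' = Some k then - t u' else 0)"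
        by (rule sum.cong) auto
      then show ?thesis by simp
    qed
    finally have "b k = bid_price a cs p q k + s (bidder k) - t (Some k)"
      unfolding bid_price_def L_def by simp
    then show "b k \<le> bid_price a cs p q k + s (bidder k)" using tt0[of "Some k"] by simp
  qed
  have "w = (\<Sum>j\<in>UNIV. p j * real (c j)) + ((\<Sum>i\<in>UNIV. s i) + ((\<Sum>l<L. q l * snd (cs ! l)) + t None))"
  proof -
    have "w = (\<Sum>j\<in>UNIV. p j * real (c j)) + ((\<Sum>i\<in>UNIV. s i)
      + ((\<Sum>l<L. q l * snd (cs ! l)) + (\<Sum>u'\<in>UNIV. t u' * (if u' = None then 1 else 0))))"
      using comp[of None] by (simp only: g1 g2 g3 g4 zc mult_1_right)
    also have "(\<Sum>u'\<in>UNIV. t u' * (if u' = None then 1 else 0)) = t None"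
    proof -
      have "(\<Sum>u'\<in>UNIV. t u' * (if u' = None then 1 else 0)) = (\<Sum>u'\<in>UNIV. if u' = None then t u' else 0)"
        by (rule sum.cong) auto
      then show ?thesis by simp
    qed
    finally show ?thesis .
  qed
  then have V: "(\<Sum>j\<in>UNIV. p j * real (c j)) + (\<Sum>l<length cs. q l * snd (cs ! l)) + (\<Sum>i\<in>UNIV. s i) \<le> w"
    using tt0[of None] unfolding L_def by simp
  have "w \<le> (\<Sum>j\<in>UNIV. p j * real (c j)) + (\<Sum>l<length cs. q l * snd (cs ! l)) + (\<Sum>i\<in>UNIV. s i)"
    by (rule dual_ge[OF xs_feas vc p0 q0 s0 dual])
  then have "qp_feasible a c b bidder xs cs p q s"
    unfolding qp_feasible_def using p0 q0 s0 dual V by simp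
  then show ?thesis by blast
qed

end


lemma cont_coord [continuous_intros]:
  fixes f :: "'a::topological_space \<Rightarrow> ('b \<Rightarrow> 'c::topological_space)"
  shows "continuous_on S f \<Longrightarrow> continuous_on S (\<lambda>x. f x i)"
  by (rule continuous_on_product_then_coordinatewise)

lemma compact_PiE_UNIV:
  fixes S :: "'a \<Rightarrow> real set"
  assumes "\<And>i. compact (S i)"
  shows "compact (Pi\<^sub>E UNIV S)"
proof -
  have "compactin (product_topology (\<lambda>i. euclidean) UNIV) (Pi\<^sub>E UNIV S)"
    unfolding compactin_PiE using assms by simp
  then show ?thesis unfolding euclidean_product_topology by simp
qed

context auc
begin

lemma step_snd:
  assumes "alg_step a c b bidder xs cs cs'" "\<forall>ct\<in>set cs. 1 \<le> snd ct"
  shows "\<forall>ct\<in>set cs'. 1 \<le> snd ct"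
  using assms unfolding alg_step_def
  by (auto dest!: least_scale_ge1)

lemma reach_snd: "reach cs \<Longrightarrow> \<forall>ct\<in>set cs. 1 \<le> snd ct"
proof (induction rule: rtranclp_induct)
  case base then show ?case by simp
next
  case (step y z) then show ?case using step_snd by blast
qed

lemma qp_opt_exists:
  assumes r: "reach cs" and nlt: "\<not> w < lp_value a c b bidder cs"
  shows "\<exists>p q s. qp_optimal a c b bidder xs cs p q s"
proof -
  obtain p0 q0 s0 where f0: "qp_feasible a c b bidder xs cs p0 q0 s0"
    using qp_feas_exists[OF r nlt] by blast
  define L where "L = length cs"
  have snd1: "1 \<le> snd (cs ! l)" if "l < L" for l
    using reach_snd[OF r] that unfolding L_def by (metis nth_mem)
  define ct :: "(nat \<Rightarrow> real) \<Rightarrow> (nat \<Rightarrow> real)" where "ct q = (\<lambda>l. if l < L then q l else 0)" for q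
  have bp_ct: "bid_price a cs p (ct q) k = bid_price a cs p q k" for p q k
    unfolding bid_price_def ct_def L_def by (intro arg_cong2[where f="(+)"] refl sum.cong) auto
  have feas_ct: "qp_feasible a c b bidder xs cs p (ct q) s" if "qp_feasible a c b bidder xs cs p q s" for p q s
  proof -
    have "(\<Sum>l<length cs. ct q l * snd (cs ! l)) = (\<Sum>l<length cs. q l * snd (cs ! l))"
      unfolding ct_def L_def by (rule sum.cong) auto
    moreover have "\<forall>l<length cs. 0 \<le> ct q l" using that unfolding qp_feasible_def ct_def L_def by auto
    ultimately show ?thesis using that unfolding qp_feasible_def bp_ct by simp
  qed
  have obj_ct: "qp_objective c cs p (ct q) = qp_objective c cs p q" for p q
    unfolding qp_objective_def ct_def L_def by (intro arg_cong2[where f="(+)"] refl sum.cong) auto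
  define \<Phi> :: "('j \<Rightarrow> real) \<times> (nat \<Rightarrow> real) \<times> ('i \<Rightarrow> real) \<Rightarrow> real"
    where "\<Phi> x = qp_objective c cs (fst x) (fst (snd x))" for x
  define Fz :: "(('j \<Rightarrow> real) \<times> (nat \<Rightarrow> real) \<times> ('i \<Rightarrow> real)) set"
    where "Fz = {x. qp_feasible a c b bidder xs cs (fst x) (fst (snd x)) (snd (snd x)) \<and> (\<forall>l. L \<le> l \<longrightarrow> fst (snd x) l = 0)}"
  define x0 where "x0 = (p0, ct q0, s0)"
  have x0F: "x0 \<in> Fz" unfolding x0_def Fz_def using feas_ct[OF f0] by (auto simp: ct_def)
  define K where "K = {x\<in>Fz. \<Phi> x \<le> \<Phi> x0}"
  have x0K: "x0 \<in> K" unfolding K_def using x0F by simp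
  define B where "B = \<Phi> x0 + w + 1"
  define box :: "(('j \<Rightarrow> real) \<times> (nat \<Rightarrow> real) \<times> ('i \<Rightarrow> real)) set"
    where "box = Pi\<^sub>E UNIV (\<lambda>_. {0..B}) \<times> (Pi\<^sub>E UNIV (\<lambda>l. if l < L then {0..B} else {0}) \<times> Pi\<^sub>E UNIV (\<lambda>_. {0..B}))"
  have cbox: "compact box" unfolding box_def
    by (intro compact_Times compact_PiE_UNIV) auto
  have Phi_terms: "real (c j) * (fst x j)\<^sup>2 \<le> \<Phi> x" "l < L \<Longrightarrow> snd (cs ! l) * (fst (snd x) l)\<^sup>2 \<le> \<Phi> x"
    if xK: "x \<in> K" for x j l
  proof -
    have q0x: "\<forall>l<L. 0 \<le> fst (snd x) l" using xK unfolding K_def Fz_def qp_feasible_def L_def by auto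
    have S1: "0 \<le> (\<Sum>j\<in>UNIV. real (c j) * (fst x j)\<^sup>2)" by (intro sum_nonneg) auto
    have tn: "0 \<le> snd (cs ! l) * (fst (snd x) l)\<^sup>2" if "l < L" for l
    proof -
      have "0 \<le> snd (cs ! l)" using snd1[OF that] by linarith
      then show ?thesis by (intro mult_nonneg_nonneg) auto
    qed
    have S2: "0 \<le> (\<Sum>l<L. snd (cs ! l) * (fst (snd x) l)\<^sup>2)"
      by (rule sum_nonneg) (simp add: tn)
    have "real (c j) * (fst x j)\<^sup>2 \<le> (\<Sum>j\<in>UNIV. real (c j) * (fst x j)\<^sup>2)"
      by (rule member_le_sum) auto
    then show "real (c j) * (fst x j)\<^sup>2 \<le> \<Phi> x" using S2 unfolding \<Phi>_def qp_objective_def L_def by simp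
    assume lL: "l < L"
    have "snd (cs ! l) * (fst (snd x) l)\<^sup>2 \<le> (\<Sum>l<L. snd (cs ! l) * (fst (snd x) l)\<^sup>2)"
      by (rule member_le_sum) (use tn lL in simp_all)
    then show "snd (cs ! l) * (fst (snd x) l)\<^sup>2 \<le> \<Phi> x" using S1 unfolding \<Phi>_def qp_objective_def L_def by simp
  qed
  have sqb: "v \<le> B" if "0 \<le> v" "d * v\<^sup>2 \<le> \<Phi> x0" "1 \<le> d" for v d
  proof -
    have "v\<^sup>2 \<le> d * v\<^sup>2" using that by (simp add: mult_le_cancel_right1)
    moreover have "v \<le> 1 + v\<^sup>2"
    proof -
      have "0 \<le> (v - 1) * (v - 1)" by simp
      then have "2 * v \<le> v * v + 1" by (simp add: algebra_simps)
      moreover have "0 \<le> v * v" by simp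
      ultimately show ?thesis unfolding power2_eq_square by linarith
    qed
    ultimately show ?thesis unfolding B_def using that w_nonneg by linarith
  qed
  have Kbox: "K \<subseteq> box"
  proof
    fix x assume xK: "x \<in> K"
    obtain p q s where xe: "x = (p, q, s)" by (cases x) auto
    have qf: "qp_feasible a c b bidder xs cs p q s" and tail: "\<forall>l. L \<le> l \<longrightarrow> q l = 0"
      and le: "\<Phi> x \<le> \<Phi> x0" using xK unfolding K_def Fz_def xe by auto
    have p0': "\<forall>j. 0 \<le> p j" and q0': "\<forall>l<L. 0 \<le> q l" and s0': "\<forall>i. 0 \<le> s i"
      and val: "(\<Sum>j\<in>UNIV. p j * real (c j)) + (\<Sum>l<L. q l * snd (cs ! l)) + (\<Sum>i\<in>UNIV. s i) = w"
      using qf unfolding qp_feasible_def L_def by auto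
    have pB: "p j \<in> {0..B}" for j
    proof -
      have "real (c j) * (p j)\<^sup>2 \<le> \<Phi> x0" using Phi_terms(1)[OF xK, of j] le xe by simp
      moreover have "1 \<le> real (c j)" using c1 by simp
      ultimately show ?thesis using sqb[of "p j" "real (c j)"] p0' by simp
    qed
    have qB: "q l \<in> (if l < L then {0..B} else {0})" for l
    proof (cases "l < L")
      case True
      have "snd (cs ! l) * (q l)\<^sup>2 \<le> \<Phi> x0" using Phi_terms(2)[OF xK True] le xe by simp
      then show ?thesis using sqb[of "q l" "snd (cs ! l)"] q0' snd1 True by simp
    next
      case False then show ?thesis using tail by simp
    qed
    have sB: "s i \<in> {0..B}" for i
    proof -
      have A1: "0 \<le> (\<Sum>j\<in>UNIV. p j * real (c j))" using p0' by (intro sum_nonneg) auto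
      have A2: "0 \<le> (\<Sum>l<L. q l * snd (cs ! l))"
        using q0' snd1 by (intro sum_nonneg) (auto intro: mult_nonneg_nonneg order_trans[OF zero_le_one])
      have "s i \<le> (\<Sum>i\<in>UNIV. s i)" by (rule member_le_sum) (use s0' in auto)
      moreover have "0 \<le> \<Phi> x0"
      proof -
        have "0 \<le> real (c undefined) * (fst x0 undefined)\<^sup>2" by simp
        then show ?thesis using Phi_terms(1)[OF x0K, of undefined] by linarith
      qed
      ultimately show ?thesis using val A1 A2 s0'[rule_format, of i] unfolding B_def by simp
    qed
    show "x \<in> box" unfolding box_def xe using pB qB sB by auto
  qed
  have clK: "closed K"
  proof -
    have "K = {x. ((\<forall>j. 0 \<le> fst x j) \<and> (\<forall>l. l < L \<longrightarrow> 0 \<le> fst (snd x) l) \<and> (\<forall>i. 0 \<le> snd (snd x) i) \<and>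
       (\<forall>k. b k \<le> (\<Sum>j\<in>UNIV. fst x j * real (a k j)) + (\<Sum>l<L. fst (snd x) l * fst (cs ! l) k) + snd (snd x) (bidder k)) \<and>
       (\<Sum>j\<in>UNIV. fst x j * real (c j)) + (\<Sum>l<L. fst (snd x) l * snd (cs ! l)) + (\<Sum>i\<in>UNIV. snd (snd x) i)
         = (\<Sum>k\<in>UNIV. b k * xs k)) \<and> (\<forall>l. L \<le> l \<longrightarrow> fst (snd x) l = 0) \<and>
       (\<Sum>j\<in>UNIV. real (c j) * (fst x j)\<^sup>2) + (\<Sum>l<L. snd (cs ! l) * (fst (snd x) l)\<^sup>2) \<le> \<Phi> x0}"
      unfolding K_def Fz_def qp_feasible_def bid_price_def \<Phi>_def qp_objective_def L_def by auto
    also have "closed \<dots>"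
      by (intro closed_Collect_conj closed_Collect_all closed_Collect_imp open_Collect_const
          closed_Collect_le closed_Collect_eq continuous_intros)
    finally show ?thesis .
  qed
  have cK: "compact K"
  proof -
    have "K = K \<inter> box" using Kbox by blast
    then show ?thesis using closed_Int_compact[OF clK cbox] by simp
  qed
  have contPhi: "continuous_on K \<Phi>"
    unfolding \<Phi>_def qp_objective_def by (intro continuous_intros)
  obtain xm where xmK: "xm \<in> K" and xmin: "\<forall>y\<in>K. \<Phi> xm \<le> \<Phi> y"
    using continuous_attains_inf[OF cK _ contPhi] x0K by blast
  obtain pm qm sm where xme: "xm = (pm, qm, sm)" by (cases xm) auto
  have "qp_optimal a c b bidder xs cs pm qm sm"
    unfolding qp_optimal_def
  proof (intro conjI allI impI)
    show "qp_feasible a c b bidder xs cs pm qm sm" using xmK unfolding K_def Fz_def xme by auto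
    fix p' q' s' assume f': "qp_feasible a c b bidder xs cs p' q' s'"
    define y where "y = (p', ct q', s')"
    have yF: "y \<in> Fz" unfolding y_def Fz_def using feas_ct[OF f'] by (auto simp: ct_def)
    have Py: "\<Phi> y = qp_objective c cs p' q'" unfolding \<Phi>_def y_def using obj_ct by simp
    show "qp_objective c cs pm qm \<le> qp_objective c cs p' q'"
    proof (cases "\<Phi> y \<le> \<Phi> x0")
      case True
      then have "y \<in> K" unfolding K_def using yF by simp
      then have "\<Phi> xm \<le> \<Phi> y" using xmin by blast
      then show ?thesis using Py unfolding \<Phi>_def xme by simp
    next
      case False
      have "\<Phi> xm \<le> \<Phi> x0" using xmin x0K by blast
      then show ?thesis using False Py unfolding \<Phi>_def xme by simp
    qed
  qed
  then show ?thesis by blast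
qed

end

theorem proposition6:
  fixes a :: "'k::finite \<Rightarrow> 'j::finite \<Rightarrow> nat" and c :: "'j \<Rightarrow> nat"
    and b :: "'k \<Rightarrow> real" and bidder :: "'k \<Rightarrow> 'i::finite" and xs :: "'k \<Rightarrow> real"
  assumes "\<forall>j. 1 \<le> c j"
    and "\<forall>k j. a k j \<le> c j"
    and "\<forall>k. 0 \<le> b k"
    and "wdp_optimal a c b bidder xs"
  shows "\<not> (\<exists>f. f 0 = [] \<and> (\<forall>n. alg_step a c b bidder xs (f n) (f (Suc n))))
    \<and> (\<forall>cs. (alg_step a c b bidder xs)\<^sup>*\<^sup>* [] cs \<longrightarrow>
            (\<Sum>k\<in>UNIV. b k * xs k) < lp_value a c b bidder cs \<longrightarrow>
            (\<exists>cs'. alg_step a c b bidder xs cs cs'))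
    \<and> (\<forall>cs. (alg_step a c b bidder xs)\<^sup>*\<^sup>* [] cs \<longrightarrow>
            \<not> (\<Sum>k\<in>UNIV. b k * xs k) < lp_value a c b bidder cs \<longrightarrow>
            (\<forall>ct\<in>set cs. valid_cut a c bidder xs ct) \<and>
            (\<exists>p q s. qp_optimal a c b bidder xs cs p q s) \<and>
            (\<forall>p q s. qp_optimal a c b bidder xs cs p q s \<longrightarrow>
                      walrasian_eq a c b bidder xs cs p q))"
proof -
  interpret auc a c b bidder xs
    by unfold_locales (use assms in auto)
  have P1: "\<not> (\<exists>f. f 0 = [] \<and> (\<forall>n. alg_step a c b bidder xs (f n) (f (Suc n))))"
    by (rule alg_terminates)
  have P2: "\<forall>cs. (alg_step a c b bidder xs)\<^sup>*\<^sup>* [] cs \<longrightarrow>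
            (\<Sum>k\<in>UNIV. b k * xs k) < lp_value a c b bidder cs \<longrightarrow>
            (\<exists>cs'. alg_step a c b bidder xs cs cs')"
    using progress by blast
  have P3: "\<forall>cs. (alg_step a c b bidder xs)\<^sup>*\<^sup>* [] cs \<longrightarrow>
            \<not> (\<Sum>k\<in>UNIV. b k * xs k) < lp_value a c b bidder cs \<longrightarrow>
            (\<forall>ct\<in>set cs. valid_cut a c bidder xs ct) \<and>
            (\<exists>p q s. qp_optimal a c b bidder xs cs p q s) \<and>
            (\<forall>p q s. qp_optimal a c b bidder xs cs p q s \<longrightarrow>
                      walrasian_eq a c b bidder xs cs p q)"
  proof (intro allI impI conjI)
    fix cs assume r: "(alg_step a c b bidder xs)\<^sup>*\<^sup>* [] cs"
      and nlt: "\<not> (\<Sum>k\<in>UNIV. b k * xs k) < lp_value a c b bidder cs"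
    show "\<forall>ct\<in>set cs. valid_cut a c bidder xs ct" by (rule reach_valid[OF r])
    show "\<exists>p q s. qp_optimal a c b bidder xs cs p q s" by (rule qp_opt_exists[OF r nlt])
    fix p q s assume "qp_optimal a c b bidder xs cs p q s"
    then have "qp_feasible a c b bidder xs cs p q s" unfolding qp_optimal_def by blast
    then show "walrasian_eq a c b bidder xs cs p q"
      by (rule walras_of_qp[OF xs_feas reach_valid[OF r]])
  qed
  show ?thesis using P1 P2 P3 by blast
qed

end
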